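(* Let $A,D\in\mathbb{B}(\mathcal{H})$, $T=\begin{bmatrix}A&0\\0&D\end{bmatrix}\in\mathbb{B}(\mathcal{H}\oplus\mathcal{H})$, $r\ge2$, and $p,q>1$ with $\frac1p+\frac1q=1$. Let $f_1,g_1,f_2,g_2$ be non-negative continuous functions on $[0,\infty)$ with $f_1(t)g_1(t)=f_2(t)g_2(t)=t$ for all $t\ge0$. Define \[ \alpha=\left\|f_1^{rp}(|\mathrm{Re}A+\mathrm{Im}A|)+f_2^{rp}(|\mathrm{Re}A-\mathrm{Im}A|)\right\|,\quad \beta=\left\|f_1^{rp}(|\mathrm{Re}D+\mathrm{Im}D|)+f_2^{rp}(|\mathrm{Re}D-\mathrm{Im}D|)\right\|, \] \[ \gamma=\left\|g_1^{rq}(|\mathrm{Re}A+\mathrm{Im}A|)+g_2^{rq}(|\mathrm{Re}A-\mathrm{Im}A|)\right\|,\quad \delta=\left\|g_1^{rq}(|\mathrm{Re}D+\mathrm{Im}D|)+g_2^{rq}(|\mathrm{Re}D-\mathrm{Im}D|)\right\|, \] \[ \alpha'=\left\|f_1^{rp}(|\mathrm{Re}A+\mathrm{Im}A|)+g_2^{rp}(|\mathrm{Re}A-\mathrm{Im}A|)\right\|,\quad \beta'=\left\|f_1^{rp}(|\mathrm{Re}D+\mathrm{Im}D|)+g_2^{rp}(|\mathrm{Re}D-\mathrm{Im}D|)\right\|, \] \[ \gamma'=\left\|g_1^{rq}(|\mathrm{Re}A+\mathrm{Im}A|)+f_2^{rq}(|\mathrm{Re}A-\mathrm{Im}A|)\right\|,\quad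 \delta'=\left\|g_1^{rq}(|\mathrm{Re}D+\mathrm{Im}D|)+f_2^{rq}(|\mathrm{Re}D-\mathrm{Im}D|)\right\|. \] Then \[ w^r(T)\le\frac12\max(\alpha,\beta)^{1/p}\max(\gamma,\delta)^{1/q} \quad\text{and}\quad w^r(T)\le\frac12\max(\alpha',\beta')^{1/p}\max(\gamma',\delta')^{1/q}. \]
   Context: $\mathcal{H}$ is a complex Hilbert space; $w(X)=\sup\{|\langle Xx,x\rangle|:\|x\|=1\}$ is the numerical radius; $|X|=(X^*X)^{1/2}$; $\mathrm{Re}X=\frac{X+X^*}{2}$ and $\mathrm{Im}X=\frac{X-X^*}{2i}$ (Cartesian decomposition $X=\mathrm{Re}X+i\,\mathrm{Im}X$); $f^s(|X|)$ denotes $(f(|X|))^s$ via continuous functional calculus; $\|\cdot\|$ is the operator norm. *)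

theory Defs
  imports "HOL-Analysis.Analysis" "HOL-Computational_Algebra.Polynomial"
begin

text \<open>A complex Hilbert space is modelled as a real Hilbert space (real inner product,
  complete) together with an orthogonal real-linear map jmul with jmul o jmul = -id,
  i.e. multiplication by the imaginary unit. The complex inner product is
  cinner x y = (x . y) + i (x . jmul y), which is linear in the first argument,
  conjugate-linear in the second, and whose real part is the real inner product.\<close>

class complex_hilbert = real_inner + complete_space +
  fixes jmul :: "'a \<Rightarrow> 'a"
  assumes jmul_add: "jmul (x + y) = jmul x + jmul y"
    and jmul_scaleR: "jmul (c *\<^sub>R x) = c *\<^sub>R jmul x"
    and jmul_jmul: "jmul (jmul x) = - x"
    and inner_jmul_jmul: "inner (jmul x) (jmul y) = inner x y"

instantiation prod :: (complex_hilbert, complex_hilbert) complex_hilbert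
begin
definition jmul_prod_def: "jmul p = (jmul (fst p), jmul (snd p))"
instance
  by standard (auto simp: jmul_prod_def jmul_add jmul_scaleR jmul_jmul inner_jmul_jmul
      inner_prod_def prod_eq_iff)
end

definition cinner :: "'a::complex_hilbert \<Rightarrow> 'a \<Rightarrow> complex" where
  "cinner x y = Complex (inner x y) (inner x (jmul y))"

text \<open>B(H): bounded real-linear maps commuting with multiplication by i.\<close>
definition clinear_op :: "('a::complex_hilbert \<Rightarrow>\<^sub>L 'a) \<Rightarrow> bool" where
  "clinear_op X \<longleftrightarrow> (\<forall>x. X (jmul x) = jmul (X x))"

definition Jop :: "'a::complex_hilbert \<Rightarrow>\<^sub>L 'a" where
  "Jop = Blinfun jmul"

text \<open>Hilbert space adjoint (for complex-linear operators it coincides with the complex adjoint).\<close>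
definition adj :: "('a::complex_hilbert \<Rightarrow>\<^sub>L 'a) \<Rightarrow> ('a \<Rightarrow>\<^sub>L 'a)" where
  "adj X = Blinfun (adjoint (blinfun_apply X))"

text \<open>Cartesian decomposition: Re X = (X + X*)/2, Im X = (X - X*)/(2i) = -(i/2)(X - X*).\<close>
definition ReOp :: "('a::complex_hilbert \<Rightarrow>\<^sub>L 'a) \<Rightarrow> ('a \<Rightarrow>\<^sub>L 'a)" where
  "ReOp X = (1/2) *\<^sub>R (X + adj X)"

definition ImOp :: "('a::complex_hilbert \<Rightarrow>\<^sub>L 'a) \<Rightarrow> ('a \<Rightarrow>\<^sub>L 'a)" where
  "ImOp X = (-1/2) *\<^sub>R (Jop o\<^sub>L (X - adj X))"

definition opow :: "('a::complex_hilbert \<Rightarrow>\<^sub>L 'a) \<Rightarrow> nat \<Rightarrow> ('a \<Rightarrow>\<^sub>L 'a)" where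
  "opow P n = ((\<lambda>Y. P o\<^sub>L Y) ^^ n) id_blinfun"

definition poly_op :: "real poly \<Rightarrow> ('a::complex_hilbert \<Rightarrow>\<^sub>L 'a) \<Rightarrow> ('a \<Rightarrow>\<^sub>L 'a)" where
  "poly_op p P = (\<Sum>i\<le>degree p. coeff p i *\<^sub>R opow P i)"

text \<open>Continuous functional calculus for a positive operator P (spectrum in [0, norm P]):
  f(P) is the norm limit of q_n(P) for any real polynomials q_n converging to f uniformly
  on [0, norm P].\<close>
definition fcalc :: "(real \<Rightarrow> real) \<Rightarrow> ('a::complex_hilbert \<Rightarrow>\<^sub>L 'a) \<Rightarrow> ('a \<Rightarrow>\<^sub>L 'a)" where
  "fcalc f P = (THE Y. \<forall>qs :: nat \<Rightarrow> real poly.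
      uniform_limit {0..norm P} (\<lambda>n t. poly (qs n) t) f sequentially \<longrightarrow>
      (\<lambda>n. poly_op (qs n) P) \<longlonglongrightarrow> Y)"

definition abs_op :: "('a::complex_hilbert \<Rightarrow>\<^sub>L 'a) \<Rightarrow> ('a \<Rightarrow>\<^sub>L 'a)" where
  "abs_op X = fcalc sqrt (adj X o\<^sub>L X)"

text \<open>f^s(|X|) = (f(|X|))^s.\<close>
definition fpow_abs :: "(real \<Rightarrow> real) \<Rightarrow> real \<Rightarrow> ('a::complex_hilbert \<Rightarrow>\<^sub>L 'a) \<Rightarrow> ('a \<Rightarrow>\<^sub>L 'a)" where
  "fpow_abs f s X = fcalc (\<lambda>t. t powr s) (fcalc f (abs_op X))"

text \<open>Numerical radius (the 0 only matters for the trivial space, where w = 0).\<close>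
definition numrad :: "('a::complex_hilbert \<Rightarrow>\<^sub>L 'a) \<Rightarrow> real" where
  "numrad X = Sup ({cmod (cinner (X x) x) | x. norm x = 1} \<union> {0})"

definition diag_op :: "('a::complex_hilbert \<Rightarrow>\<^sub>L 'a) \<Rightarrow> ('a \<Rightarrow>\<^sub>L 'a) \<Rightarrow> (('a \<times> 'a) \<Rightarrow>\<^sub>L ('a \<times> 'a))" where
  "diag_op A D = Blinfun (\<lambda>(x, y). (A x, D y))"

end

theory Submission
  imports Defs
begin


lemma inner_eq_all_imp_eq:
  fixes a b :: "'a::real_inner"
  assumes "\<And>x. inner x a = inner x b" shows "a = b"
proof -
  have "inner (a - b) a = inner (a - b) b" by (rule assms)
  hence "inner (a - b) (a - b) = 0" by (simp add: inner_diff_right)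
  thus ?thesis by simp
qed

lemma parallelogram:
  fixes a b :: "'a::real_inner"
  shows "(norm (a - b))\<^sup>2 + (norm (a + b))\<^sup>2 = 2 * (norm a)\<^sup>2 + 2 * (norm b)\<^sup>2"
  by (simp add: power2_norm_eq_inner inner_add_left inner_add_right inner_diff_left
      inner_diff_right inner_commute)

lemma cauchy_aux:
  fixes xs :: "nat \<Rightarrow> 'a::real_normed_vector"
  assumes "\<And>m n. (norm (xs m - xs n))\<^sup>2 \<le> 2 * inverse (real (Suc m)) + 2 * inverse (real (Suc n))"
  shows "Cauchy xs"
proof (rule metric_CauchyI)
  fix e :: real assume e: "e > 0"
  have e2: "e\<^sup>2 > 0" using e by simp
  obtain N :: nat where N: "4 / e\<^sup>2 < real N" using reals_Archimedean2 by blast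
  have N0: "4 < real N * e\<^sup>2" using N e2 by (simp add: pos_divide_less_eq)
  have N1: "4 < (1 + real N) * e\<^sup>2"
    unfolding distrib_right using N0 e2 by linarith
  show "\<exists>M. \<forall>m\<ge>M. \<forall>n\<ge>M. dist (xs m) (xs n) < e"
  proof (intro exI allI impI)
    fix m n assume mn: "m \<ge> N" "n \<ge> N"
    have i1: "inverse (real (Suc m)) \<le> inverse (real (Suc N))"
      using mn by (intro le_imp_inverse_le) auto
    have i2: "inverse (real (Suc n)) \<le> inverse (real (Suc N))"
      using mn by (intro le_imp_inverse_le) auto
    have "4 * inverse (real (Suc N)) < e\<^sup>2"
      using N1 by (simp add: inverse_eq_divide pos_divide_less_eq mult.commute)
    hence "(norm (xs m - xs n))\<^sup>2 < e\<^sup>2" using assms[of m n] i1 i2 by linarith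
    thus "dist (xs m) (xs n) < e" using e by (simp add: dist_norm power_less_imp_less_base)
  qed
qed

lemma quad_nonneg_imp_zero:
  fixes a c :: real
  assumes a0: "a \<ge> 0" and h: "\<And>t. 0 \<le> 2 * t * c + t\<^sup>2 * a"
  shows "c = 0"
proof -
  define t where "t = - c / (a + 1)"
  have "(a+1) * t = - c" using a0 by (simp add: t_def)
  have "(a + 1)\<^sup>2 * (2 * t * c + t\<^sup>2 * a) = 2 * (a+1) * c * ((a+1)*t) + ((a+1)*t)\<^sup>2 * a"
    by (simp add: power2_eq_square algebra_simps)
  also have "\<dots> = 2 * (a+1) * c * (- c) + (- c)\<^sup>2 * a" by (simp only: \<open>(a+1) * t = - c\<close>)
  also have "\<dots> = - (c\<^sup>2 * (a + 2))" by (simp add: power2_eq_square algebra_simps)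
  finally have eq: "(a + 1)\<^sup>2 * (2 * t * c + t\<^sup>2 * a) = - (c\<^sup>2 * (a + 2))" .
  have "0 \<le> (a + 1)\<^sup>2 * (2 * t * c + t\<^sup>2 * a)" using h[of t] by simp
  hence "c\<^sup>2 * (a + 2) \<le> 0" using eq by linarith
  moreover have "c\<^sup>2 * (a + 2) \<ge> 0" using a0 by simp
  ultimately have "c\<^sup>2 * (a + 2) = 0" by linarith
  thus ?thesis using a0 by simp
qed

lemma riesz:
  fixes \<phi> :: "'a::{real_inner,complete_space} \<Rightarrow> real"
  assumes bl: "bounded_linear \<phi>"
  shows "\<exists>y. \<forall>x. \<phi> x = inner x y"
proof (cases "\<forall>x. \<phi> x = 0")
  case True then show ?thesis by (intro exI[of _ 0]) simp
next
  case False
  then obtain x0 where x0: "\<phi> x0 \<noteq> 0" by auto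
  interpret bounded_linear \<phi> by (rule bl)
  define C where "C = {x. \<phi> x = 1}"
  have x0C: "x0 /\<^sub>R \<phi> x0 \<in> C" using x0 by (simp add: C_def scale)
  define d where "d = Inf ((\<lambda>x. (norm x)\<^sup>2) ` C)"
  have bdd: "bdd_below ((\<lambda>x. (norm x)\<^sup>2) ` C)"
    by (rule bdd_belowI[of _ 0]) auto
  have dle: "d \<le> (norm w)\<^sup>2" if "w \<in> C" for w
    unfolding d_def by (rule cInf_lower) (use that bdd in auto)
  have "\<exists>x\<in>C. (norm x)\<^sup>2 < d + inverse (real (Suc n))" for n :: nat
  proof -
    have pos: "inverse (real (Suc n)) > 0" by simp
    have "Inf ((\<lambda>x. (norm x)\<^sup>2) ` C) < d + inverse (real (Suc n))" unfolding d_def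
      using pos by linarith
    hence "\<exists>v\<in>(\<lambda>x. (norm x)\<^sup>2) ` C. v < d + inverse (real (Suc n))"
      using x0C by (intro cInf_lessD) auto
    then show ?thesis by auto
  qed
  then obtain xs where xsC: "\<And>n. xs n \<in> C" and xsn: "\<And>n. (norm (xs n))\<^sup>2 < d + inverse (real (Suc n))"
    by metis
  have dist_bound: "(norm (xs m - xs n))\<^sup>2 \<le> 2 * inverse (real (Suc m)) + 2 * inverse (real (Suc n))" for m n
  proof -
    have "\<phi> ((xs m + xs n) /\<^sub>R 2) = 1" using xsC[of m] xsC[of n] by (simp add: C_def add scale)
    hence "(xs m + xs n) /\<^sub>R 2 \<in> C" by (simp add: C_def)
    hence "d \<le> (norm ((xs m + xs n) /\<^sub>R 2))\<^sup>2" by (rule dle)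
    also have "(norm ((xs m + xs n) /\<^sub>R 2))\<^sup>2 = (norm (xs m + xs n))\<^sup>2 / 4"
      by (simp add: power_divide)
    finally have "4 * d \<le> (norm (xs m + xs n))\<^sup>2" by simp
    with parallelogram[of "xs m" "xs n"] xsn[of m] xsn[of n] show ?thesis by linarith
  qed
  have "Cauchy xs" by (rule cauchy_aux) (rule dist_bound)
  then obtain z where lim: "xs \<longlonglongrightarrow> z" using convergent_eq_Cauchy by blast
  have l1: "(\<lambda>n. \<phi> (xs n)) \<longlonglongrightarrow> \<phi> z" by (rule tendsto[OF lim])
  have "(\<lambda>n. \<phi> (xs n)) = (\<lambda>n. 1)" using xsC by (auto simp: C_def)
  with l1 have "(\<lambda>n. 1::real) \<longlonglongrightarrow> \<phi> z" by simp
  hence zC: "\<phi> z = 1" using LIMSEQ_unique tendsto_const by blast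
  have l2: "(\<lambda>n. (norm (xs n))\<^sup>2) \<longlonglongrightarrow> (norm z)\<^sup>2" by (intro tendsto_intros lim)
  have l3: "(\<lambda>n. d + inverse (real (Suc n))) \<longlonglongrightarrow> d"
    by (rule LIMSEQ_inverse_real_of_nat_add)
  have zd: "(norm z)\<^sup>2 \<le> d"
    by (rule LIMSEQ_le[OF l2 l3]) (use xsn less_imp_le in blast)
  have orth: "inner z w = 0" if w: "\<phi> w = 0" for w
  proof (rule quad_nonneg_imp_zero[where a="(norm w)\<^sup>2"])
    show "0 \<le> (norm w)\<^sup>2" by simp
    fix t :: real
    have "\<phi> (z + t *\<^sub>R w) = 1" using zC w by (simp add: add scale)
    hence "z + t *\<^sub>R w \<in> C" by (simp add: C_def)
    hence "d \<le> (norm (z + t *\<^sub>R w))\<^sup>2" by (rule dle)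
    also have "\<dots> = inner (z + t *\<^sub>R w) (z + t *\<^sub>R w)" by (rule power2_norm_eq_inner)
    also have "\<dots> = inner z z + 2 * t * inner z w + t\<^sup>2 * inner w w"
      by (simp add: inner_add_left inner_add_right inner_commute power2_eq_square algebra_simps)
    also have "\<dots> = (norm z)\<^sup>2 + 2 * t * inner z w + t\<^sup>2 * (norm w)\<^sup>2"
      by (simp add: dot_square_norm)
    finally show "0 \<le> 2 * t * inner z w + t\<^sup>2 * (norm w)\<^sup>2" using zd by linarith
  qed
  have z0: "z \<noteq> 0" using zC by auto
  show ?thesis
  proof (intro exI allI)
    fix x
    have "\<phi> (x - \<phi> x *\<^sub>R z) = 0" using zC by (simp add: diff scale)
    hence "inner z (x - \<phi> x *\<^sub>R z) = 0" by (rule orth)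
    hence "inner x z = \<phi> x * (norm z)\<^sup>2"
      by (simp add: inner_diff_right inner_commute power2_norm_eq_inner)
    thus "\<phi> x = inner x (z /\<^sub>R (norm z)\<^sup>2)" using z0 by simp
  qed
qed

lemma adj_exists:
  fixes X :: "'a::{real_inner,complete_space} \<Rightarrow>\<^sub>L 'a"
  shows "\<exists>g. bounded_linear g \<and> (\<forall>x y. inner (X x) y = inner x (g y))"
proof -
  have "\<exists>w. \<forall>x. inner (X x) y = inner x w" for y
    by (rule riesz) (intro bounded_linear_compose[OF bounded_linear_inner_left] blinfun.bounded_linear_right)
  then obtain g where g: "\<And>x y. inner (X x) y = inner x (g y)" by metis
  have "bounded_linear g"
  proof (rule bounded_linear_intro[where K="norm X"])
    fix y1 y2 show "g (y1 + y2) = g y1 + g y2"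
      by (rule inner_eq_all_imp_eq) (simp add: inner_add_right flip: g)
  next
    fix r y show "g (r *\<^sub>R y) = r *\<^sub>R g y"
      by (rule inner_eq_all_imp_eq) (simp flip: g)
  next
    fix y
    have "(norm (g y))\<^sup>2 = inner (X (g y)) y" by (simp add: g power2_norm_eq_inner)
    also have "\<dots> \<le> norm (X (g y)) * norm y" by (rule norm_cauchy_schwarz)
    also have "\<dots> \<le> norm X * norm (g y) * norm y"
      by (intro mult_right_mono norm_blinfun) auto
    finally have "norm (g y) * norm (g y) \<le> (norm y * norm X) * norm (g y)"
      by (simp add: power2_eq_square algebra_simps)
    thus "norm (g y) \<le> norm y * norm X"
      by (cases "norm (g y) = 0") (auto simp: mult_le_cancel_right)
  qed
  with g show ?thesis by blast
qed

lemma adj_apply_eq: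
  fixes X :: "'a::complex_hilbert \<Rightarrow>\<^sub>L 'a"
  shows "\<exists>g. bounded_linear g \<and> blinfun_apply (adj X) = g \<and> (\<forall>x y. inner (X x) y = inner x (g y))"
proof -
  obtain g where g1: "bounded_linear g" and g2: "\<forall>x y. inner (X x) y = inner x (g y)"
    using adj_exists by blast
  have "adjoint (blinfun_apply X) = g" using adjoint_unique[OF g2] .
  hence "blinfun_apply (adj X) = g" unfolding adj_def using bounded_linear_Blinfun_apply[OF g1] by simp
  thus ?thesis using g1 g2 by blast
qed

lemma adj_works: "inner ((X::'a::complex_hilbert \<Rightarrow>\<^sub>L 'a) x) y = inner x (adj X y)"
proof -
  obtain g where "blinfun_apply (adj X) = g" "\<forall>x y. inner (X x) y = inner x (g y)"
    using adj_apply_eq[of X] by blast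
  thus ?thesis by simp
qed

lemma adj_works2: "inner (adj (X::'a::complex_hilbert \<Rightarrow>\<^sub>L 'a) x) y = inner x (X y)"
  using adj_works[of X y x] by (simp add: inner_commute)

definition sa :: "('a::real_inner \<Rightarrow>\<^sub>L 'a) \<Rightarrow> bool" where
  "sa X \<longleftrightarrow> (\<forall>x y. inner (X x) y = inner x (X y))"

lemma adj_sa:
  assumes "sa (X::'a::complex_hilbert \<Rightarrow>\<^sub>L 'a)" shows "adj X = X"
proof (rule blinfun_eqI)
  fix y
  show "adj X y = X y"
  proof (rule inner_eq_all_imp_eq)
    fix x
    have "inner (X x) y = inner x (X y)" using assms by (simp add: sa_def)
    thus "inner x (adj X y) = inner x (X y)" using adj_works[of X x y] by simp
  qed
qed


lemma jmul_inner: "inner (jmul x) y = - inner x (jmul y)"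
proof -
  have "inner (jmul x) y = inner (jmul (jmul x)) (jmul y)" by (simp add: inner_jmul_jmul)
  also have "\<dots> = - inner x (jmul y)" by (simp add: jmul_jmul)
  finally show ?thesis .
qed

lemma jmul_inner_self: "inner x (jmul x) = 0"
  using jmul_inner[of x x] by (simp add: inner_commute)

lemma norm_jmul: "norm (jmul x) = norm x"
  by (simp add: norm_eq_sqrt_inner inner_jmul_jmul)

lemma bl_jmul: "bounded_linear (jmul :: 'a::complex_hilbert \<Rightarrow> 'a)"
  by (rule bounded_linear_intro[where K=1]) (auto simp: jmul_add jmul_scaleR norm_jmul)

lemma Jop_apply[simp]: "blinfun_apply Jop = jmul"
  unfolding Jop_def by (rule bounded_linear_Blinfun_apply[OF bl_jmul])

lemma jmul_minus: "jmul (- x) = - jmul x"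
  using jmul_scaleR[of "-1" x] by simp

lemma jmul_diff: "jmul (x - y) = jmul x - jmul y"
  using jmul_add[of x "- y"] by (simp add: jmul_minus)

lemma clinear_adj:
  assumes "clinear_op (X::'a::complex_hilbert \<Rightarrow>\<^sub>L 'a)"
  shows "adj X (jmul x) = jmul (adj X x)"
proof (rule inner_eq_all_imp_eq)
  fix y
  have "inner y (adj X (jmul x)) = inner (X y) (jmul x)" by (simp add: adj_works)
  also have "\<dots> = - inner (jmul (X y)) x" by (simp add: jmul_inner)
  also have "\<dots> = - inner (X (jmul y)) x" using assms by (simp add: clinear_op_def)
  also have "\<dots> = - inner (jmul y) (adj X x)" by (simp add: adj_works)
  also have "\<dots> = inner y (jmul (adj X x))" by (simp add: jmul_inner)
  finally show "inner y (adj X (jmul x)) = inner y (jmul (adj X x))" .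
qed

lemma ReOp_apply: "ReOp X x = (1/2) *\<^sub>R (X x + adj X x)"
  by (simp add: ReOp_def blinfun.add_left blinfun.scaleR_left)

lemma ImOp_apply: "ImOp X x = (-1/2) *\<^sub>R jmul (X x - adj X x)"
  by (simp only: ImOp_def blinfun.scaleR_left blinfun_apply_blinfun_compose blinfun.diff_left Jop_apply)

lemma sa_ReOp: "sa (ReOp (X::'a::complex_hilbert \<Rightarrow>\<^sub>L 'a))"
  unfolding sa_def ReOp_apply
  by (simp add: inner_add_left inner_add_right adj_works[of X] adj_works2[of X] add.commute)

lemma sa_ImOp:
  assumes "clinear_op (X::'a::complex_hilbert \<Rightarrow>\<^sub>L 'a)"
  shows "sa (ImOp X)"
  unfolding sa_def ImOp_apply
proof (intro allI)
  fix x y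
  have cx: "X (jmul y) = jmul (X y)" using assms by (simp add: clinear_op_def)
  have ca: "adj X (jmul y) = jmul (adj X y)" by (rule clinear_adj[OF assms])
  have "inner ((-1/2) *\<^sub>R jmul (X x - adj X x)) y = (1/2) * inner (X x - adj X x) (jmul y)"
    by (simp add: jmul_inner)
  also have "\<dots> = (1/2) * (inner x (adj X (jmul y)) - inner x (X (jmul y)))"
    by (simp add: inner_diff_left adj_works[of X] adj_works2[of X])
  also have "\<dots> = (1/2) * (inner x (jmul (adj X y)) - inner x (jmul (X y)))"
    by (simp add: cx ca)
  also have "\<dots> = inner x ((-1/2) *\<^sub>R jmul (X y - adj X y))"
    by (simp add: jmul_diff inner_diff_right algebra_simps)
  finally show "inner ((-1/2) *\<^sub>R jmul (X x - adj X x)) y = inner x ((-1/2) *\<^sub>R jmul (X y - adj X y))" .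
qed

lemma ReOp_form: "inner (ReOp (X::'a::complex_hilbert \<Rightarrow>\<^sub>L 'a) x) x = inner (X x) x"
proof -
  have "inner (adj X x) x = inner (X x) x" using adj_works2[of X x x] by (simp add: inner_commute)
  thus ?thesis unfolding ReOp_apply by (simp add: inner_add_left)
qed

lemma ImOp_form:
  assumes "clinear_op (X::'a::complex_hilbert \<Rightarrow>\<^sub>L 'a)"
  shows "inner (ImOp X x) x = inner (X x) (jmul x)"
proof -
  have cx: "X (jmul x) = jmul (X x)" using assms by (simp add: clinear_op_def)
  have "inner (ImOp X x) x = (1/2) * inner (X x - adj X x) (jmul x)"
    unfolding ImOp_apply by (simp add: jmul_inner)
  also have "\<dots> = (1/2) * (inner (X x) (jmul x) - inner x (X (jmul x)))"
    by (simp add: inner_diff_left adj_works2[of X])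
  also have "\<dots> = (1/2) * (inner (X x) (jmul x) - inner x (jmul (X x)))" by (simp add: cx)
  also have "\<dots> = inner (X x) (jmul x)"
    using jmul_inner[of x "X x"] by (simp add: inner_commute)
  finally show ?thesis .
qed


lemma sa_add: "sa S \<Longrightarrow> sa T \<Longrightarrow> sa (S + T)"
  by (simp add: sa_def blinfun.add_left inner_add_left inner_add_right)
lemma sa_diff: "sa S \<Longrightarrow> sa T \<Longrightarrow> sa (S - T)"
  by (simp add: sa_def blinfun.diff_left inner_diff_left inner_diff_right)
lemma sa_minus: "sa S \<Longrightarrow> sa (- S)"
  by (simp add: sa_def blinfun.minus_left)
lemma sa_scaleR: "sa S \<Longrightarrow> sa (c *\<^sub>R S)"
  by (simp add: sa_def blinfun.scaleR_left)
lemma sa_id: "sa id_blinfun"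
  by (simp add: sa_def)
lemma sa_zero: "sa 0"
  by (simp add: sa_def)
lemma sa_comp_comm:
  assumes "sa S" "sa T" "S o\<^sub>L T = T o\<^sub>L S"
  shows "sa (S o\<^sub>L T)"
  unfolding sa_def
proof (intro allI)
  fix x y
  have "inner ((S o\<^sub>L T) x) y = inner x ((T o\<^sub>L S) y)"
    using assms(1,2) by (simp add: sa_def)
  thus "inner ((S o\<^sub>L T) x) y = inner x ((S o\<^sub>L T) y)" using assms(3) by simp
qed

lemma comp_sum: "P o\<^sub>L sum f A = (\<Sum>i\<in>A. P o\<^sub>L f i)"
  by (rule blinfun_eqI) (simp add: blinfun.sum_left blinfun.sum_right)

lemma comp_scaleR_right: "P o\<^sub>L (c *\<^sub>R X) = c *\<^sub>R (P o\<^sub>L X)"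
  by (rule blinfun_eqI) (simp add: blinfun.scaleR_left blinfun.scaleR_right)

lemma comp_id_right[simp]: "P o\<^sub>L id_blinfun = P"
  by (rule blinfun_eqI) simp

lemma comp_id_left[simp]: "id_blinfun o\<^sub>L P = P"
  by (rule blinfun_eqI) simp

lemma comp_assoc: "(P o\<^sub>L Q) o\<^sub>L R = P o\<^sub>L (Q o\<^sub>L R)"
  by (rule blinfun_eqI) simp

lemma opow_0[simp]: "opow P 0 = id_blinfun"
  by (simp add: opow_def)

lemma opow_Suc: "opow P (Suc n) = P o\<^sub>L opow P n"
  by (simp add: opow_def)

lemma poly_op_bound:
  assumes "degree p \<le> N"
  shows "poly_op p P = (\<Sum>i\<le>N. coeff p i *\<^sub>R opow P i)"
  unfolding poly_op_def
proof (rule sum.mono_neutral_left)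
  show "\<forall>i\<in>{..N} - {..degree p}. coeff p i *\<^sub>R opow P i = 0"
    by (auto simp: coeff_eq_0)
qed (use assms in auto)

lemma poly_op_pCons: "poly_op (pCons a p) P = a *\<^sub>R id_blinfun + (P o\<^sub>L poly_op p P)"
proof -
  have "poly_op (pCons a p) P = (\<Sum>i\<le>Suc (degree p). coeff (pCons a p) i *\<^sub>R opow P i)"
    by (rule poly_op_bound) (rule degree_pCons_le)
  also have "\<dots> = (\<Sum>i\<le>degree p. coeff (pCons a p) (Suc i) *\<^sub>R opow P (Suc i)) + coeff (pCons a p) 0 *\<^sub>R opow P 0"
    by (rule sum.atMost_Suc_shift[THEN trans]) simp
  also have "\<dots> = (\<Sum>i\<le>degree p. P o\<^sub>L (coeff p i *\<^sub>R opow P i)) + a *\<^sub>R id_blinfun"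
    by (simp add: opow_Suc comp_scaleR_right)
  also have "\<dots> = a *\<^sub>R id_blinfun + (P o\<^sub>L poly_op p P)"
    by (simp add: poly_op_def comp_sum add.commute)
  finally show ?thesis .
qed

lemma poly_op_0[simp]: "poly_op 0 P = 0"
  by (simp add: poly_op_def)

lemma poly_op_const: "poly_op [:a:] P = a *\<^sub>R id_blinfun"
  using poly_op_pCons[of a 0 P] by simp

lemma poly_op_X: "poly_op [:0, 1:] P = P"
  using poly_op_pCons[of 0 "[:1:]" P] by (simp add: poly_op_const)

lemma poly_op_add: "poly_op (p + q) P = poly_op p P + poly_op q P"
proof -
  define N where "N = max (degree p) (degree q)"
  have "degree (p + q) \<le> N" unfolding N_def by (rule degree_add_le_max)
  moreover have "degree p \<le> N" "degree q \<le> N" by (auto simp: N_def)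
  ultimately show ?thesis
    by (simp add: poly_op_bound[of _ N] scaleR_add_left sum.distrib)
qed

lemma poly_op_smult: "poly_op (smult c p) P = c *\<^sub>R poly_op p P"
proof -
  have "degree (smult c p) \<le> degree p" by (rule degree_smult_le)
  thus ?thesis
    by (simp add: poly_op_bound[of _ "degree p"] scaleR_sum_right)
qed

lemma poly_op_uminus: "poly_op (- p) P = - poly_op p P"
proof -
  have "poly_op (- p) P + poly_op p P = 0" by (simp flip: poly_op_add)
  thus ?thesis by (simp add: eq_neg_iff_add_eq_0)
qed

lemma poly_op_diff: "poly_op (p - q) P = poly_op p P - poly_op q P"
  using poly_op_add[of p "- q" P] by (simp add: poly_op_uminus)

lemma poly_op_mult: "poly_op (p * q) P = poly_op p P o\<^sub>L poly_op q P"
proof (induction p rule: pCons_induct)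
  case 0 then show ?case by simp
next
  case (pCons a p)
  have "poly_op (pCons a p * q) P = poly_op (smult a q + pCons 0 (p * q)) P" by simp
  also have "\<dots> = a *\<^sub>R poly_op q P + (P o\<^sub>L (poly_op p P o\<^sub>L poly_op q P))"
    by (simp add: poly_op_add poly_op_smult poly_op_pCons pCons.IH)
  also have "\<dots> = poly_op (pCons a p) P o\<^sub>L poly_op q P"
    by (rule blinfun_eqI) (simp add: poly_op_pCons blinfun.add_left blinfun.scaleR_left)
  finally show ?case .
qed

lemma poly_op_comm: "poly_op p P o\<^sub>L poly_op q P = poly_op q P o\<^sub>L poly_op p P"
  by (simp flip: poly_op_mult add: mult.commute)

lemma poly_op_comm_P: "P o\<^sub>L poly_op q P = poly_op q P o\<^sub>L P"
  using poly_op_comm[of "[:0,1:]" P q] by (simp add: poly_op_X)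

lemma poly_op_sq: "poly_op [:0, 0, 1:] P = P o\<^sub>L P"
proof -
  have e: "[:0, 0, 1:] = [:0, 1:] * [:(0::real), 1:]" by simp
  show ?thesis by (simp only: e poly_op_mult poly_op_X)
qed

lemma poly_op_pcompose_sq: "poly_op (pcompose q [:0, 0, 1:]) S = poly_op q (S o\<^sub>L S)"
proof (induction q rule: pCons_induct)
  case 0 then show ?case by simp
next
  case (pCons a p)
  show ?case
    by (simp add: pcompose_pCons poly_op_add poly_op_const poly_op_mult poly_op_sq pCons.IH
        poly_op_pCons comp_assoc)
qed

lemma sa_poly_op: "sa S \<Longrightarrow> sa (poly_op p S)"
proof (induction p rule: pCons_induct)
  case 0 then show ?case by (simp add: sa_zero)
next
  case (pCons a p)
  have "sa (S o\<^sub>L poly_op p S)"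
    by (rule sa_comp_comm) (use pCons in \<open>auto simp: poly_op_comm_P\<close>)
  thus ?case by (simp add: poly_op_pCons sa_add sa_scaleR sa_id)
qed


definition posb :: "real \<Rightarrow> real \<Rightarrow> ('a::real_inner \<Rightarrow>\<^sub>L 'a) \<Rightarrow> bool" where
  "posb m M S \<longleftrightarrow> sa S \<and> (\<forall>x. m * (norm x)\<^sup>2 \<le> inner (S x) x \<and> inner (S x) x \<le> M * (norm x)\<^sup>2)"

inductive_set Qc :: "real \<Rightarrow> real \<Rightarrow> real poly set" for m M where
  Qsq: "w = 1 \<or> w = [:-m, 1:] \<or> w = [:M, -1:] \<Longrightarrow> r * r * w \<in> Qc m M"
| Qadd: "p \<in> Qc m M \<Longrightarrow> q \<in> Qc m M \<Longrightarrow> p + q \<in> Qc m M"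

lemma poly_op_one: "poly_op 1 P = id_blinfun"
  using poly_op_const[of 1 P] by (simp add: one_pCons)

lemma poly_op_L: "poly_op [:a, 1:] P = a *\<^sub>R id_blinfun + P"
  using poly_op_pCons[of a "[:1:]" P] by (simp add: poly_op_const)

lemma poly_op_B: "poly_op [:a, -1:] P = a *\<^sub>R id_blinfun - P"
proof -
  have "poly_op [:a, -1:] P = a *\<^sub>R id_blinfun + (P o\<^sub>L ((-1) *\<^sub>R id_blinfun))"
    using poly_op_pCons[of a "[:-1:]" P] by (simp add: poly_op_const)
  also have "\<dots> = a *\<^sub>R id_blinfun - P"
    by (rule blinfun_eqI) (simp add: blinfun.add_left blinfun.diff_left blinfun.scaleR_left blinfun.scaleR_right
      blinfun.minus_left blinfun.minus_right)
  finally show ?thesis .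
qed

lemma Qc_pos:
  assumes S: "posb m M S" and p: "p \<in> Qc m M"
  shows "0 \<le> inner (poly_op p S x) x"
  using p
proof (induction arbitrary: x)
  case (Qsq w r)
  define R where "R = poly_op r S"
  define W where "W = poly_op w S"
  have saS: "sa S" using S by (simp add: posb_def)
  have saR: "sa R" unfolding R_def by (rule sa_poly_op[OF saS])
  have comm: "R (W y) = W (R y)" for y
    using poly_op_comm[of r S w] unfolding R_def W_def by (metis blinfun_apply_blinfun_compose)
  have "inner (poly_op (r * r * w) S x) x = inner (R (R (W x))) x"
    by (simp add: poly_op_mult R_def W_def)
  also have "\<dots> = inner (R (W x)) (R x)" using saR by (simp add: sa_def)
  also have "\<dots> = inner (W (R x)) (R x)" by (simp add: comm)
  also have "\<dots> \<ge> 0"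
  proof -
    define y where "y = R x"
    have b: "m * (norm y)\<^sup>2 \<le> inner (S y) y" "inner (S y) y \<le> M * (norm y)\<^sup>2"
      using S by (auto simp: posb_def)
    from Qsq.hyps consider "w = 1" | "w = [:-m, 1:]" | "w = [:M, -1:]" by blast
    then show ?thesis
    proof cases
      case 1 then show ?thesis by (simp add: W_def poly_op_one)
    next
      case 2
      have "inner (W y) y = inner (S y) y - m * (norm y)\<^sup>2"
        by (simp add: W_def 2 poly_op_L blinfun.add_left blinfun.diff_left blinfun.scaleR_left inner_add_left
            inner_diff_left power2_norm_eq_inner)
      then show ?thesis using b y_def by simp
    next
      case 3
      have "inner (W y) y = M * (norm y)\<^sup>2 - inner (S y) y"
        by (simp add: W_def 3 poly_op_B blinfun.diff_left blinfun.scaleR_left inner_diff_left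
            power2_norm_eq_inner)
      then show ?thesis using b y_def by simp
    qed
  qed
  finally show ?case .
next
  case (Qadd p q)
  then show ?case by (simp add: poly_op_add blinfun.add_left inner_add_left)
qed

lemma Qc_sq_mult: "p \<in> Qc m M \<Longrightarrow> s * s * p \<in> Qc m M"
proof (induction rule: Qc.induct)
  case (Qsq w r)
  have eq: "s * s * (r * r * w) = (s * r) * (s * r) * w" by (simp add: mult_ac)
  have "(s * r) * (s * r) * w \<in> Qc m M" using Qsq by (rule Qc.Qsq)
  then show ?case by (simp only: eq)
next
  case (Qadd p q)
  then show ?case by (simp add: distrib_left Qc.Qadd)
qed

lemma Qc_smult: "c \<ge> 0 \<Longrightarrow> p \<in> Qc m M \<Longrightarrow> smult c p \<in> Qc m M"
proof -
  assume c: "c \<ge> 0" and p: "p \<in> Qc m M"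
  have e: "smult c p = [:sqrt c:] * [:sqrt c:] * p" using c by simp
  show ?thesis by (simp only: e) (rule Qc_sq_mult[OF p])
qed

lemma Qc_const: "c \<ge> 0 \<Longrightarrow> [:c:] \<in> Qc m M"
proof -
  assume c: "c \<ge> 0"
  have e: "[:c:] = [:sqrt c:] * [:sqrt c:] * 1" using c by simp
  show ?thesis by (simp only: e) (rule Qc.Qsq, simp)
qed

lemma key_LB:
  fixes m M :: real
  shows "[:M, -1:] * [:M, -1:] * [:-m, 1:] + [:-m, 1:] * [:-m, 1:] * [:M, -1:]
      = smult (M - m) ([:-m, 1:] * [:M, -1:])"
  by (subst poly_eq_poly_eq_iff[symmetric]) (auto simp: algebra_simps)

lemma Qc_L:
  assumes mM: "m < M"
  shows "p \<in> Qc m M \<Longrightarrow> [:-m, 1:] * p \<in> Qc m M"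
proof (induction rule: Qc.induct)
  case (Qsq w r)
  define L where "L = [:-m, 1:]"
  define B where "B = [:M, -1:]"
  from Qsq consider "w = 1" | "w = L" | "w = B" unfolding L_def B_def by blast
  then show ?case
  proof cases
    case 1
    then show ?thesis using Qc.Qsq[of L m M r] by (simp add: L_def mult_ac)
  next
    case 2
    have "L * (r * r * w) = (r * L) * (r * L) * 1" using 2 by (simp add: mult_ac)
    then show ?thesis using Qc.Qsq[of 1 m M "r * L"] by (simp add: L_def)
  next
    case 3
    have "L * (r * r * w) = smult (1 / (M - m)) ((r * B) * (r * B) * L + (r * L) * (r * L) * B)"
    proof -
      have "(r * B) * (r * B) * L + (r * L) * (r * L) * B = r * r * (B * B * L + L * L * B)"
        by (simp add: algebra_simps)
      also have "\<dots> = r * r * smult (M - m) (L * B)" using key_LB[of M m] by (simp add: L_def B_def)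
      finally show ?thesis using mM 3 by (simp add: mult_ac)
    qed
    moreover have "(r * B) * (r * B) * L + (r * L) * (r * L) * B \<in> Qc m M"
      by (rule Qc.Qadd) (rule Qc.Qsq, simp add: L_def B_def)+
    ultimately show ?thesis using mM by (simp add: L_def Qc_smult)
  qed
next
  case (Qadd p q)
  then show ?case by (simp add: distrib_left Qc.Qadd)
qed

lemma Qc_B:
  assumes mM: "m < M"
  shows "p \<in> Qc m M \<Longrightarrow> [:M, -1:] * p \<in> Qc m M"
proof (induction rule: Qc.induct)
  case (Qsq w r)
  define L where "L = [:-m, 1:]"
  define B where "B = [:M, -1:]"
  from Qsq consider "w = 1" | "w = L" | "w = B" unfolding L_def B_def by blast
  then show ?case
  proof cases
    case 1
    then show ?thesis using Qc.Qsq[of B m M r] by (simp add: B_def mult_ac)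
  next
    case 3
    have "B * (r * r * w) = (r * B) * (r * B) * 1" using 3 by (simp add: mult_ac)
    then show ?thesis using Qc.Qsq[of 1 m M "r * B"] by (simp add: B_def)
  next
    case 2
    have "B * (r * r * w) = smult (1 / (M - m)) ((r * B) * (r * B) * L + (r * L) * (r * L) * B)"
    proof -
      have "(r * B) * (r * B) * L + (r * L) * (r * L) * B = r * r * (B * B * L + L * L * B)"
        by (simp add: algebra_simps)
      also have "\<dots> = r * r * smult (M - m) (L * B)" using key_LB[of M m] by (simp add: L_def B_def)
      finally show ?thesis using mM 2 by (simp add: mult_ac)
    qed
    moreover have "(r * B) * (r * B) * L + (r * L) * (r * L) * B \<in> Qc m M"
      by (rule Qc.Qadd) (rule Qc.Qsq, simp add: L_def B_def)+
    ultimately show ?thesis using mM by (simp add: B_def Qc_smult)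
  qed
next
  case (Qadd p q)
  then show ?case by (simp add: distrib_left Qc.Qadd)
qed

lemma right_lim_nonneg:
  fixes p :: "real poly"
  assumes ab: "a < b" and h: "\<And>t. a < t \<Longrightarrow> t \<le> b \<Longrightarrow> 0 \<le> poly p t"
  shows "0 \<le> poly p a"
proof (rule tendsto_lowerbound)
  show "(poly p \<longlongrightarrow> poly p a) (at_right a)"
  proof -
    have "(poly p \<longlongrightarrow> poly p a) (at a within UNIV)" using poly_isCont[of a p] by (simp add: isCont_def)
    then show ?thesis by (rule tendsto_within_subset) simp
  qed
  show "\<forall>\<^sub>F t in at_right a. 0 \<le> poly p t"
    unfolding eventually_at_right_field using ab h by (intro exI[of _ b]) auto
  show "at_right a \<noteq> bot" by simp
qed

lemma left_lim_nonneg: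
  fixes p :: "real poly"
  assumes ab: "a < b" and h: "\<And>t. a \<le> t \<Longrightarrow> t < b \<Longrightarrow> 0 \<le> poly p t"
  shows "0 \<le> poly p b"
proof (rule tendsto_lowerbound)
  show "(poly p \<longlongrightarrow> poly p b) (at_left b)"
  proof -
    have "(poly p \<longlongrightarrow> poly p b) (at b within UNIV)" using poly_isCont[of b p] by (simp add: isCont_def)
    then show ?thesis by (rule tendsto_within_subset) simp
  qed
  show "\<forall>\<^sub>F t in at_left b. 0 \<le> poly p t"
    unfolding eventually_at_left_field using ab h by (intro exI[of _ a]) auto
  show "at_left b \<noteq> bot" by simp
qed


lemma Qc_complete:
  assumes mM: "m < M"
  shows "(\<forall>t\<in>{m..M}. 0 \<le> poly q t) \<Longrightarrow> q \<in> Qc m M"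
proof (induction "degree q" arbitrary: q rule: less_induct)
  case (less q)
  show ?case
  proof (cases "degree q = 0")
    case True
    then obtain a where qa: "q = [:a:]" by (rule degree_eq_zeroE)
    have "0 \<le> a" using less.prems mM qa by auto
    thus ?thesis using qa Qc_const by simp
  next
    case False
    have "\<exists>l\<in>{m..M}. \<forall>y\<in>{m..M}. poly q l \<le> poly q y"
      by (rule continuous_attains_inf) (use mM in \<open>auto intro: continuous_on_poly[OF continuous_on_id]\<close>)
    then obtain l where l: "l \<in> {m..M}" and lmin: "\<forall>y\<in>{m..M}. poly q l \<le> poly q y" by blast
    define c where "c = poly q l"
    have c0: "c \<ge> 0" using less.prems l c_def by auto
    have "poly (q - [:c:]) l = 0" by (simp add: c_def)
    hence "[:-l, 1:] dvd (q - [:c:])" using poly_eq_0_iff_dvd by blast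
    then obtain q1 where q1: "q - [:c:] = [:-l, 1:] * q1" by (rule dvdE)
    have qeq: "q = [:c:] + [:-l, 1:] * q1" by (metis q1 diff_add_cancel add.commute)
    have pt: "poly q t = c + (t - l) * poly q1 t" for t
    proof -
      have "poly q t = poly ([:c:] + [:-l, 1:] * q1) t" by (metis qeq)
      also have "\<dots> = c + (t - l) * poly q1 t" by (simp add: algebra_simps)
      finally show ?thesis .
    qed
    have q1nz: "q1 \<noteq> 0" using False qeq by auto
    have dq1: "degree q1 < degree q"
    proof -
      have "degree ([:-l, 1:] * q1) = 1 + degree q1" using q1nz by (subst degree_mult_eq) auto
      moreover have "degree (q - [:c:]) \<le> degree q" using degree_diff_le_max[of q "[:c:]"] by simp
      ultimately show ?thesis using q1 by simp
    qed
    have h: "0 \<le> (t - l) * poly q1 t" if "t \<in> {m..M}" for t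
    proof -
      have "poly q l \<le> poly q t" using lmin that by blast
      thus ?thesis using pt[of t] c_def by linarith
    qed
    consider "l = m" | "l = M" | "m < l \<and> l < M" using l by fastforce
    then show ?thesis
    proof cases
      case 1
      have pos1: "0 \<le> poly q1 t" if "m < t" "t \<le> M" for t
        using h[of t] that 1 by (simp add: zero_le_mult_iff)
      have pm: "0 \<le> poly q1 m" by (rule right_lim_nonneg[OF mM pos1])
      have "\<forall>t\<in>{m..M}. 0 \<le> poly q1 t"
      proof
        fix t assume "t \<in> {m..M}"
        thus "0 \<le> poly q1 t" using pm pos1[of t] by (cases "t = m") auto
      qed
      then have "q1 \<in> Qc m M" using less.hyps dq1 by blast
      hence "[:-l, 1:] * q1 \<in> Qc m M" using Qc_L[OF mM] 1 by simp
      hence "[:c:] + [:-l, 1:] * q1 \<in> Qc m M" by (rule Qc.Qadd[OF Qc_const[OF c0]])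
      thus ?thesis using qeq by simp
    next
      case 2
      have neg1: "0 \<le> poly (- q1) t" if "m \<le> t" "t < M" for t
        using h[of t] that 2 by (simp add: mult_le_0_iff zero_le_mult_iff)
      have pM: "0 \<le> poly (- q1) M" by (rule left_lim_nonneg[OF mM neg1])
      have "\<forall>t\<in>{m..M}. 0 \<le> poly (- q1) t"
      proof
        fix t assume "t \<in> {m..M}"
        thus "0 \<le> poly (- q1) t" using pM neg1[of t] by (cases "t = M") auto
      qed
      then have "- q1 \<in> Qc m M" using less.hyps[of "- q1"] dq1 by simp
      hence "[:M, -1:] * (- q1) \<in> Qc m M" by (rule Qc_B[OF mM])
      moreover have "[:M, -1:] * (- q1) = [:-l, 1:] * q1"
        using 2 by (subst poly_eq_poly_eq_iff[symmetric]) (auto simp: algebra_simps)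
      ultimately have "[:-l, 1:] * q1 \<in> Qc m M" by simp
      hence "[:c:] + [:-l, 1:] * q1 \<in> Qc m M" by (rule Qc.Qadd[OF Qc_const[OF c0]])
      thus ?thesis using qeq by simp
    next
      case 3
      have pos1: "0 \<le> poly q1 t" if "l < t" "t \<le> M" for t
        using h[of t] that 3 by (simp add: zero_le_mult_iff)
      have neg1: "0 \<le> poly (- q1) t" if "m \<le> t" "t < l" for t
        using h[of t] that 3 by (simp add: mult_le_0_iff zero_le_mult_iff)
      have "0 \<le> poly q1 l" by (rule right_lim_nonneg[OF _ pos1]) (use 3 in auto)
      moreover have "0 \<le> poly (- q1) l" by (rule left_lim_nonneg[OF _ neg1]) (use 3 in auto)
      ultimately have "poly q1 l = 0" by simp
      hence "[:-l, 1:] dvd q1" using poly_eq_0_iff_dvd by blast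
      then obtain q2 where q2: "q1 = [:-l, 1:] * q2" by (rule dvdE)
      have q2nz: "q2 \<noteq> 0" using q1nz q2 by auto
      have dq2: "degree q2 < degree q"
      proof -
        have "degree ([:-l, 1:] * q2) = 1 + degree q2" using q2nz by (subst degree_mult_eq) auto
        hence "degree q1 = 1 + degree q2" using q2 by simp
        thus ?thesis using dq1 by simp
      qed
      have pos2: "0 \<le> poly q2 t" if "t \<in> {m..M}" "t \<noteq> l" for t
      proof -
        have "poly q1 t = poly ([:-l, 1:] * q2) t" by (metis q2)
        also have "\<dots> = (t - l) * poly q2 t" by (simp add: algebra_simps)
        finally have "0 \<le> (t - l) * ((t - l) * poly q2 t)" using h[OF that(1)] by simp
        hence "0 \<le> (t - l)\<^sup>2 * poly q2 t" by (simp add: power2_eq_square mult.assoc)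
        moreover have "(t - l)\<^sup>2 > 0" using that(2) by simp
        ultimately show ?thesis by (simp add: zero_le_mult_iff)
      qed
      have "0 \<le> poly q2 l" by (rule right_lim_nonneg[OF _ pos2]) (use 3 in auto)
      hence "\<forall>t\<in>{m..M}. 0 \<le> poly q2 t" using pos2 by (cases "l \<in> {m..M}") blast+
      then have "q2 \<in> Qc m M" using less.hyps dq2 by blast
      hence "[:-l, 1:] * [:-l, 1:] * q2 \<in> Qc m M" by (rule Qc_sq_mult)
      hence "[:c:] + [:-l, 1:] * [:-l, 1:] * q2 \<in> Qc m M" by (rule Qc.Qadd[OF Qc_const[OF c0]])
      moreover have "q = [:c:] + [:-l, 1:] * [:-l, 1:] * q2"
        using qeq q2 by (simp only: mult.assoc)
      ultimately show ?thesis by simp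
    qed
  qed
qed

lemma poly_op_pos:
  assumes "posb m M S" "m < M" "\<forall>t\<in>{m..M}. 0 \<le> poly q t"
  shows "0 \<le> inner (poly_op q S x) x"
  by (rule Qc_pos[OF assms(1) Qc_complete[OF assms(2,3)]])

lemma poly_op_norm:
  assumes S: "posb m M S" "m < M" and c: "\<forall>t\<in>{m..M}. \<bar>poly q t\<bar> \<le> c"
  shows "norm (poly_op q S) \<le> c"
proof (rule norm_blinfun_bound)
  have "\<bar>poly q m\<bar> \<le> c" using c S(2) by auto
  hence c0: "0 \<le> c" using abs_ge_zero[of "poly q m"] by linarith
  thus "0 \<le> c" .
  fix x
  define Q where "Q = poly_op q S"
  have saQ: "sa Q" using S(1) unfolding Q_def posb_def by (simp add: sa_poly_op)
  have "\<forall>t\<in>{m..M}. 0 \<le> poly ([:c * c:] - q * q) t"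
  proof
    fix t assume "t \<in> {m..M}"
    hence "\<bar>poly q t\<bar> \<le> c" using c by blast
    hence "\<bar>poly q t\<bar> * \<bar>poly q t\<bar> \<le> c * c" using c0 by (intro mult_mono) auto
    hence "poly q t * poly q t \<le> c * c" by (simp only: abs_mult_self_eq)
    thus "0 \<le> poly ([:c * c:] - q * q) t" by simp
  qed
  hence "0 \<le> inner (poly_op ([:c * c:] - q * q) S x) x" by (rule poly_op_pos[OF S])
  hence "0 \<le> c * c * (norm x)\<^sup>2 - inner (Q (Q x)) x"
    by (simp add: poly_op_diff poly_op_const poly_op_mult Q_def blinfun.diff_left blinfun.scaleR_left
        inner_diff_left power2_norm_eq_inner)
  moreover have "inner (Q (Q x)) x = (norm (Q x))\<^sup>2"
    using saQ by (simp add: sa_def power2_norm_eq_inner)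
  ultimately have "(norm (Q x))\<^sup>2 \<le> c * c * (norm x)\<^sup>2" by linarith
  also have "c * c * (norm x)\<^sup>2 = (c * norm x)\<^sup>2" by (simp add: power2_eq_square)
  finally have "(norm (Q x))\<^sup>2 \<le> (c * norm x)\<^sup>2" .
  thus "norm (Q x) \<le> c * norm x" by (rule power2_le_imp_le) (use c0 in simp)
qed


instance complex_hilbert \<subseteq> banach ..

definition psd :: "('a::real_inner \<Rightarrow>\<^sub>L 'a) \<Rightarrow> bool" where
  "psd P \<longleftrightarrow> sa P \<and> (\<forall>x. 0 \<le> inner (P x) x)"

lemma form_le_norm: "inner ((P :: 'a::real_inner \<Rightarrow>\<^sub>L 'a) x) x \<le> norm P * (norm x)\<^sup>2"
proof -
  have "inner (P x) x \<le> norm (P x) * norm x" by (rule norm_cauchy_schwarz)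
  also have "\<dots> \<le> norm P * norm x * norm x" by (intro mult_right_mono norm_blinfun) auto
  finally show ?thesis by (simp add: power2_eq_square mult.assoc)
qed

lemma abs_form_le_norm: "\<bar>inner ((P :: 'a::real_inner \<Rightarrow>\<^sub>L 'a) x) x\<bar> \<le> norm P * (norm x)\<^sup>2"
proof -
  have "\<bar>inner (P x) x\<bar> \<le> norm (P x) * norm x" by (rule Cauchy_Schwarz_ineq2)
  also have "\<dots> \<le> norm P * norm x * norm x" by (intro mult_right_mono norm_blinfun) auto
  finally show ?thesis by (simp add: power2_eq_square mult.assoc)
qed

lemma psd_posb: "psd P \<Longrightarrow> posb 0 (norm P) P"
  by (simp add: psd_def posb_def form_le_norm)

lemma poly_op_zero_op: "poly_op q 0 = poly q 0 *\<^sub>R id_blinfun"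
proof (induction q rule: pCons_induct)
  case 0 then show ?case by simp
next
  case (pCons a p) then show ?case by (simp add: poly_op_pCons)
qed

lemma psd_poly_pos:
  assumes P: "psd P" and q: "\<forall>t\<in>{0..norm P}. 0 \<le> poly q t"
  shows "0 \<le> inner (poly_op q P x) x"
proof (cases "norm P = 0")
  case True
  hence "P = 0" by simp
  moreover have "0 \<le> poly q 0" using q by simp
  ultimately show ?thesis by (simp add: poly_op_zero_op blinfun.scaleR_left)
next
  case False
  hence "0 < norm P" by simp
  thus ?thesis by (rule poly_op_pos[OF psd_posb[OF P] _ q])
qed

lemma psd_poly_norm:
  assumes P: "psd P" and q: "\<forall>t\<in>{0..norm P}. \<bar>poly q t\<bar> \<le> c"
  shows "norm (poly_op q P) \<le> c"
proof (cases "norm P = 0")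
  case True
  hence P0: "P = 0" by simp
  have c: "\<bar>poly q 0\<bar> \<le> c" using q by simp
  have "norm (poly_op q P) = \<bar>poly q 0\<bar> * norm (id_blinfun :: 'a \<Rightarrow>\<^sub>L 'a)"
    by (simp add: P0 poly_op_zero_op)
  also have "\<dots> \<le> \<bar>poly q 0\<bar> * 1" by (intro mult_left_mono norm_blinfun_id_le) auto
  finally show ?thesis using c by simp
next
  case False
  hence "0 < norm P" by simp
  thus ?thesis by (rule poly_op_norm[OF psd_posb[OF P] _ q])
qed

lemma poly_ops_close:
  assumes P: "psd P" and h: "\<forall>t\<in>{0..norm P}. \<bar>poly a t - poly b t\<bar> \<le> c"
  shows "norm (poly_op a P - poly_op b P) \<le> c"
  using psd_poly_norm[OF P, of "a - b" c] h by (simp add: poly_op_diff)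

lemma pf_poly:
  fixes g :: "real \<Rightarrow> real"
  assumes "polynomial_function g"
  shows "\<exists>q. g = poly q"
proof -
  have "real_polynomial_function g" using assms by (simp add: real_polynomial_function_eq)
  then obtain a n where g: "g = (\<lambda>x. \<Sum>i\<le>n. a i * x ^ i)"
    using real_polynomial_function_iff_sum by blast
  show ?thesis
    by (intro exI[of _ "\<Sum>i\<le>n. monom (a i) i"]) (simp add: g poly_sum poly_monom fun_eq_iff)
qed

lemma weier:
  fixes f :: "real \<Rightarrow> real"
  assumes "continuous_on {a..b} f"
  shows "\<exists>qs. uniform_limit {a..b} (\<lambda>n t. poly (qs n) t) f sequentially"
proof -
  obtain g where g: "uniform_limit {a..b} g f sequentially" "\<And>n. polynomial_function (g n)"
    using Stone_Weierstrass_uniform_limit[OF compact_Icc assms] by blast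
  have "\<forall>n. \<exists>q. g n = poly q" using g(2) pf_poly by blast
  from choice[OF this] obtain qs where "\<forall>n. g n = poly (qs n)" by blast
  hence "g = (\<lambda>n t. poly (qs n) t)" by (simp add: fun_eq_iff)
  thus ?thesis using g(1) by blast
qed

definition ulim :: "real set \<Rightarrow> (nat \<Rightarrow> real poly) \<Rightarrow> (real \<Rightarrow> real) \<Rightarrow> bool" where
  "ulim K qs f \<longleftrightarrow> uniform_limit K (\<lambda>n t. poly (qs n) t) f sequentially"

lemma ulim_close:
  assumes "ulim K qs f" "ulim K rs f" "e > 0"
  shows "\<exists>N. \<forall>n\<ge>N. \<forall>m\<ge>N. \<forall>t\<in>K. \<bar>poly (qs n) t - poly (rs m) t\<bar> \<le> e"
proof -
  have "e / 2 > 0" using assms(3) by simp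
  from uniform_limitD[OF assms(1)[unfolded ulim_def] this] uniform_limitD[OF assms(2)[unfolded ulim_def] this]
  have "\<forall>\<^sub>F n in sequentially. (\<forall>t\<in>K. dist (poly (qs n) t) (f t) < e / 2) \<and> (\<forall>t\<in>K. dist (poly (rs n) t) (f t) < e / 2)"
    by (rule eventually_conj)
  then obtain N where N: "\<And>n. n \<ge> N \<Longrightarrow> (\<forall>t\<in>K. dist (poly (qs n) t) (f t) < e / 2) \<and> (\<forall>t\<in>K. dist (poly (rs n) t) (f t) < e / 2)"
    unfolding eventually_sequentially by blast
  show ?thesis
  proof (intro exI allI impI ballI)
    fix n m t assume "n \<ge> N" "m \<ge> N" "t \<in> K"
    hence "\<bar>poly (qs n) t - f t\<bar> < e / 2" "\<bar>poly (rs m) t - f t\<bar> < e / 2"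
      using N[of n] N[of m] by (auto simp: dist_real_def)
    thus "\<bar>poly (qs n) t - poly (rs m) t\<bar> \<le> e" by linarith
  qed
qed

lemma ops_cauchy:
  assumes P: "psd P" and q: "ulim {0..norm P} qs f"
  shows "Cauchy (\<lambda>n. poly_op (qs n) P)"
proof (rule metric_CauchyI)
  fix e :: real assume e: "e > 0"
  hence "e / 2 > 0" by simp
  from ulim_close[OF q q this] obtain N where
    N: "\<And>n m t. n \<ge> N \<Longrightarrow> m \<ge> N \<Longrightarrow> t \<in> {0..norm P} \<Longrightarrow> \<bar>poly (qs n) t - poly (qs m) t\<bar> \<le> e / 2"
    by blast
  show "\<exists>M. \<forall>m\<ge>M. \<forall>n\<ge>M. dist (poly_op (qs m) P) (poly_op (qs n) P) < e"
  proof (intro exI allI impI)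
    fix m n assume "m \<ge> N" "n \<ge> N"
    hence "norm (poly_op (qs m) P - poly_op (qs n) P) \<le> e / 2"
      using N by (intro poly_ops_close[OF P]) blast
    thus "dist (poly_op (qs m) P) (poly_op (qs n) P) < e" using e by (simp add: dist_norm)
  qed
qed

lemma ops_same_lim:
  assumes P: "psd P" and q: "ulim {0..norm P} qs f" and r: "ulim {0..norm P} rs f"
    and lim: "(\<lambda>n. poly_op (qs n) P) \<longlonglongrightarrow> Y"
  shows "(\<lambda>n. poly_op (rs n) P) \<longlonglongrightarrow> Y"
proof -
  have "(\<lambda>n. poly_op (rs n) P - poly_op (qs n) P) \<longlonglongrightarrow> 0"
  proof (rule tendstoI)
    fix e :: real assume e: "e > 0"
    hence "e / 2 > 0" by simp
    from ulim_close[OF r q this] obtain N where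
      N: "\<And>n m t. n \<ge> N \<Longrightarrow> m \<ge> N \<Longrightarrow> t \<in> {0..norm P} \<Longrightarrow> \<bar>poly (rs n) t - poly (qs m) t\<bar> \<le> e / 2"
      by blast
    show "\<forall>\<^sub>F n in sequentially. dist (poly_op (rs n) P - poly_op (qs n) P) 0 < e"
      unfolding eventually_sequentially
    proof (intro exI allI impI)
      fix n assume "n \<ge> N"
      hence "norm (poly_op (rs n) P - poly_op (qs n) P) \<le> e / 2"
        using N by (intro poly_ops_close[OF P]) blast
      thus "dist (poly_op (rs n) P - poly_op (qs n) P) 0 < e" using e by simp
    qed
  qed
  from tendsto_add[OF this lim] show ?thesis by simp
qed

lemma fcalc_conv:
  fixes P :: "'a::complex_hilbert \<Rightarrow>\<^sub>L 'a"
  assumes P: "psd P" and f: "continuous_on {0..norm P} f" and q: "ulim {0..norm P} qs f"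
  shows "(\<lambda>n. poly_op (qs n) P) \<longlonglongrightarrow> fcalc f P"
proof -
  obtain Y where Y: "(\<lambda>n. poly_op (qs n) P) \<longlonglongrightarrow> Y"
    using ops_cauchy[OF P q] convergent_eq_Cauchy by blast
  have all: "\<forall>rs. uniform_limit {0..norm P} (\<lambda>n t. poly (rs n) t) f sequentially \<longrightarrow>
      (\<lambda>n. poly_op (rs n) P) \<longlonglongrightarrow> Y"
  proof (intro allI impI)
    fix rs assume "uniform_limit {0..norm P} (\<lambda>n t. poly (rs n) t) f sequentially"
    hence "ulim {0..norm P} rs f" by (simp add: ulim_def)
    thus "(\<lambda>n. poly_op (rs n) P) \<longlonglongrightarrow> Y" by (rule ops_same_lim[OF P q _ Y])
  qed
  have "fcalc f P = Y"
    unfolding fcalc_def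
  proof (rule the_equality)
    show "\<forall>rs. uniform_limit {0..norm P} (\<lambda>n t. poly (rs n) t) f sequentially \<longrightarrow>
      (\<lambda>n. poly_op (rs n) P) \<longlonglongrightarrow> Y" by (rule all)
    fix Z assume "\<forall>rs. uniform_limit {0..norm P} (\<lambda>n t. poly (rs n) t) f sequentially \<longrightarrow>
      (\<lambda>n. poly_op (rs n) P) \<longlonglongrightarrow> Z"
    hence "(\<lambda>n. poly_op (qs n) P) \<longlonglongrightarrow> Z" using q unfolding ulim_def by blast
    thus "Z = Y" using Y LIMSEQ_unique by blast
  qed
  thus ?thesis using Y by simp
qed

lemma fcalc_exists:
  assumes "continuous_on {0..norm P} f"
  obtains qs where "ulim {0..norm P} qs f"
  using weier[OF assms] unfolding ulim_def by blast

lemma lim_form: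
  assumes "Y \<longlonglongrightarrow> (Z :: 'a::real_inner \<Rightarrow>\<^sub>L 'a)"
  shows "(\<lambda>n. inner (Y n x) y) \<longlonglongrightarrow> inner (Z x) y"
  by (intro tendsto_intros blinfun.tendsto[OF assms tendsto_const])

lemma lim_nonneg:
  fixes a :: "nat \<Rightarrow> real"
  assumes lim: "a \<longlonglongrightarrow> D" and ev: "\<And>e. e > 0 \<Longrightarrow> \<forall>\<^sub>F n in sequentially. - e \<le> a n"
  shows "0 \<le> D"
proof (rule ccontr)
  assume "\<not> 0 \<le> D"
  hence e: "- D / 2 > 0" by simp
  have "- (- D / 2) \<le> D" by (rule tendsto_lowerbound[OF lim ev[OF e]]) simp
  thus False using e by simp
qed

lemma fcalc_poly:
  fixes P :: "'a::complex_hilbert \<Rightarrow>\<^sub>L 'a"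
  assumes P: "psd P"
  shows "fcalc (poly q) P = poly_op q P"
proof -
  have "ulim {0..norm P} (\<lambda>n. q) (poly q)" unfolding ulim_def by (rule uniform_limit_const)
  from fcalc_conv[OF P _ this] have "(\<lambda>n. poly_op q P) \<longlonglongrightarrow> fcalc (poly q) P"
    by (simp add: continuous_on_poly[OF continuous_on_id])
  thus ?thesis using LIMSEQ_unique tendsto_const by blast
qed

lemma fcalc_sa:
  fixes P :: "'a::complex_hilbert \<Rightarrow>\<^sub>L 'a"
  assumes P: "psd P" and f: "continuous_on {0..norm P} f"
  shows "sa (fcalc f P)"
proof -
  obtain qs where q: "ulim {0..norm P} qs f" using fcalc_exists[OF f] by blast
  note lim = fcalc_conv[OF P f q]
  have saP: "sa P" using P by (simp add: psd_def)
  show ?thesis unfolding sa_def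
  proof (intro allI)
    fix x y
    have "(\<lambda>n. inner (poly_op (qs n) P x) y) \<longlonglongrightarrow> inner (fcalc f P x) y" by (rule lim_form[OF lim])
    moreover have "(\<lambda>n. inner (poly_op (qs n) P y) x) \<longlonglongrightarrow> inner (fcalc f P y) x" by (rule lim_form[OF lim])
    moreover have "inner (poly_op (qs n) P x) y = inner (poly_op (qs n) P y) x" for n
      using sa_poly_op[OF saP, of "qs n"] by (simp add: sa_def inner_commute)
    ultimately have "(\<lambda>n. inner (poly_op (qs n) P y) x) \<longlonglongrightarrow> inner (fcalc f P x) y" by simp
    hence "inner (fcalc f P x) y = inner (fcalc f P y) x"
      using \<open>(\<lambda>n. inner (poly_op (qs n) P y) x) \<longlonglongrightarrow> inner (fcalc f P y) x\<close> LIMSEQ_unique by blast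
    thus "inner (fcalc f P x) y = inner x (fcalc f P y)" by (simp add: inner_commute)
  qed
qed

lemma fcalc_mono:
  fixes P :: "'a::complex_hilbert \<Rightarrow>\<^sub>L 'a"
  assumes P: "psd P" and f: "continuous_on {0..norm P} f" and g: "continuous_on {0..norm P} g"
    and le: "\<forall>t\<in>{0..norm P}. g t \<le> f t"
  shows "inner (fcalc g P x) x \<le> inner (fcalc f P x) x"
proof -
  obtain qs where q: "ulim {0..norm P} qs f" using fcalc_exists[OF f] by blast
  obtain rs where r: "ulim {0..norm P} rs g" using fcalc_exists[OF g] by blast
  have lim: "(\<lambda>n. inner (poly_op (qs n) P x) x - inner (poly_op (rs n) P x) x) \<longlonglongrightarrow>
      inner (fcalc f P x) x - inner (fcalc g P x) x"
    by (intro tendsto_diff lim_form fcalc_conv P f g q r)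
  have "0 \<le> inner (fcalc f P x) x - inner (fcalc g P x) x"
  proof (rule lim_nonneg[OF lim])
    fix e :: real assume e: "e > 0"
    define d where "d = e / (2 * (norm x)\<^sup>2 + 2)"
    have h1: "(norm x)\<^sup>2 + 1 > 0" using zero_le_power2[of "norm x"] by linarith
    have pos: "2 * (norm x)\<^sup>2 + 2 > 0" using h1 by simp
    hence d: "d > 0" using e by (simp add: d_def)
    have de: "2 * d * (norm x)\<^sup>2 \<le> e"
    proof -
      have "d * (2 * (norm x)\<^sup>2 + 2) = e" unfolding d_def using pos by simp
      hence "2 * d * (norm x)\<^sup>2 = e - 2 * d" by (simp add: algebra_simps)
      thus ?thesis using d by linarith
    qed
    from uniform_limitD[OF q[unfolded ulim_def] d] uniform_limitD[OF r[unfolded ulim_def] d]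
    have "\<forall>\<^sub>F n in sequentially. (\<forall>t\<in>{0..norm P}. dist (poly (qs n) t) (f t) < d) \<and>
        (\<forall>t\<in>{0..norm P}. dist (poly (rs n) t) (g t) < d)"
      by (rule eventually_conj)
    then show "\<forall>\<^sub>F n in sequentially. - e \<le> inner (poly_op (qs n) P x) x - inner (poly_op (rs n) P x) x"
    proof eventually_elim
      case (elim n)
      have "\<forall>t\<in>{0..norm P}. 0 \<le> poly (qs n - rs n + [:2 * d:]) t"
      proof
        fix t assume t: "t \<in> {0..norm P}"
        hence "\<bar>poly (qs n) t - f t\<bar> < d" "\<bar>poly (rs n) t - g t\<bar> < d" "g t \<le> f t"
          using elim le by (auto simp: dist_real_def)
        thus "0 \<le> poly (qs n - rs n + [:2 * d:]) t" by simp
      qed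
      hence "0 \<le> inner (poly_op (qs n - rs n + [:2 * d:]) P x) x" by (rule psd_poly_pos[OF P])
      hence "0 \<le> inner (poly_op (qs n) P x) x - inner (poly_op (rs n) P x) x + 2 * d * (norm x)\<^sup>2"
        by (simp add: poly_op_add poly_op_diff poly_op_const blinfun.add_left blinfun.diff_left
            blinfun.scaleR_left inner_add_left inner_diff_left power2_norm_eq_inner)
      thus ?case using de by linarith
    qed
  qed
  thus ?thesis by simp
qed

lemma fcalc_psd:
  fixes P :: "'a::complex_hilbert \<Rightarrow>\<^sub>L 'a"
  assumes P: "psd P" and f: "continuous_on {0..norm P} f" and nn: "\<forall>t\<in>{0..norm P}. 0 \<le> f t"
  shows "psd (fcalc f P)"
  unfolding psd_def
proof (intro conjI allI)
  show "sa (fcalc f P)" by (rule fcalc_sa[OF P f])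
  fix x
  have "inner (fcalc (poly 0) P x) x \<le> inner (fcalc f P x) x"
    by (rule fcalc_mono[OF P f]) (use nn in \<open>auto intro: continuous_on_poly[OF continuous_on_id]\<close>)
  thus "0 \<le> inner (fcalc f P x) x" by (simp add: fcalc_poly[OF P])
qed

lemma fcalc_cong:
  fixes P :: "'a::complex_hilbert \<Rightarrow>\<^sub>L 'a"
  assumes P: "psd P" and f: "continuous_on {0..norm P} f" and eq: "\<forall>t\<in>{0..norm P}. f t = g t"
  shows "fcalc f P = fcalc g P"
proof -
  have "continuous_on {0..norm P} f = continuous_on {0..norm P} g"
    by (rule continuous_on_cong) (use eq in auto)
  hence g: "continuous_on {0..norm P} g" using f by simp
  obtain qs where q: "ulim {0..norm P} qs f" using fcalc_exists[OF f] by blast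
  hence q': "ulim {0..norm P} qs g" unfolding ulim_def using eq
    by (subst uniform_limit_cong'[where i=f]) auto
  show ?thesis using fcalc_conv[OF P f q] fcalc_conv[OF P g q'] LIMSEQ_unique by blast
qed

lemma fcalc_mult:
  fixes P :: "'a::complex_hilbert \<Rightarrow>\<^sub>L 'a"
  assumes P: "psd P" and f: "continuous_on {0..norm P} f" and g: "continuous_on {0..norm P} g"
  shows "fcalc (\<lambda>t. f t * g t) P = fcalc f P o\<^sub>L fcalc g P"
proof -
  obtain qs where q: "ulim {0..norm P} qs f" using fcalc_exists[OF f] by blast
  obtain rs where r: "ulim {0..norm P} rs g" using fcalc_exists[OF g] by blast
  have fg: "continuous_on {0..norm P} (\<lambda>t. f t * g t)" by (intro continuous_intros f g)
  have "ulim {0..norm P} (\<lambda>n. qs n * rs n) (\<lambda>t. f t * g t)"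
    unfolding ulim_def poly_mult
    by (rule uniform_lim_mult[OF q[unfolded ulim_def] r[unfolded ulim_def]])
      (rule compact_imp_bounded[OF compact_continuous_image[OF _ compact_Icc]], fact)+
  from fcalc_conv[OF P fg this]
  have l1: "(\<lambda>n. poly_op (qs n) P o\<^sub>L poly_op (rs n) P) \<longlonglongrightarrow> fcalc (\<lambda>t. f t * g t) P"
    by (simp add: poly_op_mult)
  have l2: "(\<lambda>n. poly_op (qs n) P o\<^sub>L poly_op (rs n) P) \<longlonglongrightarrow> (fcalc f P o\<^sub>L fcalc g P)"
    by (rule bounded_bilinear.tendsto[OF bounded_bilinear_blinfun_compose fcalc_conv[OF P f q] fcalc_conv[OF P g r]])
  show ?thesis using l1 l2 LIMSEQ_unique by blast
qed


lemma sa_sq_psd: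
  fixes S :: "'a::complex_hilbert \<Rightarrow>\<^sub>L 'a"
  assumes "sa S" shows "psd (S o\<^sub>L S)"
  unfolding psd_def
proof (intro conjI allI)
  show "sa (S o\<^sub>L S)" by (rule sa_comp_comm[OF assms assms refl])
  fix x
  have "inner ((S o\<^sub>L S) x) x = inner (S x) (S x)" using assms by (simp add: sa_def)
  thus "0 \<le> inner ((S o\<^sub>L S) x) x" by simp
qed

lemma norm_sq_le:
  fixes S :: "'a::complex_hilbert \<Rightarrow>\<^sub>L 'a"
  assumes "sa S" shows "(norm S)\<^sup>2 \<le> norm (S o\<^sub>L S)"
proof -
  have "norm S \<le> sqrt (norm (S o\<^sub>L S))"
  proof (rule norm_blinfun_bound)
    show "0 \<le> sqrt (norm (S o\<^sub>L S))" by simp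
    fix x
    have "(norm (S x))\<^sup>2 = inner ((S o\<^sub>L S) x) x"
      using assms by (simp add: sa_def power2_norm_eq_inner)
    also have "\<dots> \<le> norm (S o\<^sub>L S) * (norm x)\<^sup>2" by (rule form_le_norm)
    also have "\<dots> = (sqrt (norm (S o\<^sub>L S)) * norm x)\<^sup>2" by (simp add: power_mult_distrib)
    finally show "norm (S x) \<le> sqrt (norm (S o\<^sub>L S)) * norm x"
      by (rule power2_le_imp_le) simp
  qed
  hence "(norm S)\<^sup>2 \<le> (sqrt (norm (S o\<^sub>L S)))\<^sup>2" by (intro power_mono) auto
  thus ?thesis by simp
qed

lemma abs_op_sa: "sa S \<Longrightarrow> abs_op S = fcalc sqrt (S o\<^sub>L (S::'a::complex_hilbert \<Rightarrow>\<^sub>L 'a))"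
  by (simp add: abs_op_def adj_sa)

lemma cont_sqrt: "continuous_on A sqrt"
  by (intro continuous_intros)

lemma abs_op_psd:
  fixes S :: "'a::complex_hilbert \<Rightarrow>\<^sub>L 'a"
  assumes "sa S" shows "psd (abs_op S)"
  unfolding abs_op_sa[OF assms]
  by (rule fcalc_psd[OF sa_sq_psd[OF assms] cont_sqrt]) auto

lemma abs_op_ge:
  fixes S :: "'a::complex_hilbert \<Rightarrow>\<^sub>L 'a"
  assumes saS: "sa S" shows "inner (S x) x \<le> inner (abs_op S x) x"
proof (cases "norm S = 0")
  case True
  hence "S = 0" by simp
  moreover have "0 \<le> inner (abs_op S x) x" using abs_op_psd[OF saS] by (simp add: psd_def)
  ultimately show ?thesis by simp
next
  case False
  hence nS: "norm S > 0" by simp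
  define P where "P = S o\<^sub>L S"
  have P: "psd P" unfolding P_def by (rule sa_sq_psd[OF saS])
  have SP: "(norm S)\<^sup>2 \<le> norm P" unfolding P_def by (rule norm_sq_le[OF saS])
  obtain qs where q: "ulim {0..norm P} qs sqrt" using fcalc_exists[OF cont_sqrt] by blast
  have lim: "(\<lambda>n. poly_op (qs n) P) \<longlonglongrightarrow> abs_op S"
    unfolding abs_op_sa[OF saS] P_def[symmetric] by (rule fcalc_conv[OF P cont_sqrt q])
  have lim2: "(\<lambda>n. inner (poly_op (qs n) P x) x - inner (S x) x) \<longlonglongrightarrow> inner (abs_op S x) x - inner (S x) x"
    by (intro tendsto_diff tendsto_const lim_form[OF lim])
  have posS: "posb (- norm S) (norm S) S"
    unfolding posb_def
  proof (intro conjI allI saS)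
    fix x
    have "\<bar>inner (S x) x\<bar> \<le> norm S * (norm x)\<^sup>2" by (rule abs_form_le_norm)
    thus "- norm S * (norm x)\<^sup>2 \<le> inner (S x) x" "inner (S x) x \<le> norm S * (norm x)\<^sup>2" by auto
  qed
  have "0 \<le> inner (abs_op S x) x - inner (S x) x"
  proof (rule lim_nonneg[OF lim2])
    fix e :: real assume e: "e > 0"
    have h1: "(norm x)\<^sup>2 + 1 > 0" using zero_le_power2[of "norm x"] by linarith
    define d where "d = e / ((norm x)\<^sup>2 + 1)"
    have d: "d > 0" using e h1 by (simp add: d_def)
    have de: "d * (norm x)\<^sup>2 \<le> e"
    proof -
      have "d * ((norm x)\<^sup>2 + 1) = e" unfolding d_def using h1 by simp
      hence "d * (norm x)\<^sup>2 = e - d" by (simp add: algebra_simps)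
      thus ?thesis using d by linarith
    qed
    from uniform_limitD[OF q[unfolded ulim_def] d]
    show "\<forall>\<^sub>F n in sequentially. - e \<le> inner (poly_op (qs n) P x) x - inner (S x) x"
    proof eventually_elim
      case (elim n)
      define r where "r = pcompose (qs n) [:0, 0, 1:] - [:0, 1:] + [:d:]"
      have "\<forall>t\<in>{- norm S..norm S}. 0 \<le> poly r t"
      proof
        fix t assume t: "t \<in> {- norm S..norm S}"
        hence "\<bar>t\<bar> \<le> norm S" by auto
        hence "\<bar>t\<bar> * \<bar>t\<bar> \<le> norm S * norm S" by (intro mult_mono) auto
        hence "t * t \<le> norm S * norm S" by (simp only: abs_mult_self_eq)
        hence "t * t \<in> {0..norm P}" using SP by (simp add: power2_eq_square)
        hence "dist (poly (qs n) (t * t)) (sqrt (t * t)) < d" using elim by blast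
        hence "\<bar>poly (qs n) (t * t) - sqrt (t * t)\<bar> < d" by (simp only: dist_real_def)
        moreover have "sqrt (t * t) \<ge> t" by simp
        ultimately show "0 \<le> poly r t" by (simp add: r_def poly_pcompose)
      qed
      moreover have "- norm S < norm S" using nS by simp
      ultimately have "0 \<le> inner (poly_op r S x) x" using poly_op_pos[OF posS] by blast
      hence "0 \<le> inner (poly_op (qs n) P x) x - inner (S x) x + d * (norm x)\<^sup>2"
        by (simp add: r_def P_def poly_op_add poly_op_diff poly_op_const poly_op_X poly_op_pcompose_sq
            blinfun.add_left blinfun.diff_left blinfun.scaleR_left inner_add_left inner_diff_left
            power2_norm_eq_inner)
      thus ?case using de by linarith
    qed
  qed
  thus ?thesis by simp
qed

lemma abs_op_uminus: "abs_op (- S) = abs_op (S::'a::complex_hilbert \<Rightarrow>\<^sub>L 'a)"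
proof -
  have "adj (- S) o\<^sub>L (- S) = adj S o\<^sub>L S"
  proof (rule blinfun_eqI)
    fix x
    show "(adj (- S) o\<^sub>L - S) x = (adj S o\<^sub>L S) x"
    proof (rule inner_eq_all_imp_eq)
      fix y
      show "inner y ((adj (- S) o\<^sub>L - S) x) = inner y ((adj S o\<^sub>L S) x)"
        by (simp add: adj_works[symmetric] blinfun.minus_left)
    qed
  qed
  thus ?thesis by (simp add: abs_op_def)
qed

lemma abs_op_abs:
  fixes S :: "'a::complex_hilbert \<Rightarrow>\<^sub>L 'a"
  assumes saS: "sa S" shows "\<bar>inner (S x) x\<bar> \<le> inner (abs_op S x) x"
proof -
  have "inner (S x) x \<le> inner (abs_op S x) x" by (rule abs_op_ge[OF saS])
  moreover have "inner ((- S) x) x \<le> inner (abs_op (- S) x) x" by (rule abs_op_ge[OF sa_minus[OF saS]])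
  ultimately show ?thesis by (simp add: abs_op_uminus blinfun.minus_left)
qed


lemma tangent_powr:
  fixes u b k :: real
  assumes u: "u \<ge> 0" and b: "b > 0" and k: "k \<ge> 1"
  shows "b powr k + k * b powr (k - 1) * (u - b) \<le> u powr k"
proof -
  have bk: "b powr (k - 1) * b = b powr k"
    using b by (simp add: powr_diff)
  show ?thesis
  proof (cases "u = 0")
    case True
    have "b powr k + k * b powr (k - 1) * (u - b) = (1 - k) * b powr k"
      using True bk by (simp add: algebra_simps)
    also have "\<dots> \<le> 0" using k by (simp add: mult_nonpos_nonneg)
    finally show ?thesis using True by simp
  next
    case False
    hence u0: "u > 0" using u by simp
    have y: "(u powr k) powr (1/k) * (b powr k) powr (1 - 1/k) \<le> (1/k) * u powr k + (1 - 1/k) * b powr k"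
      by (rule Youngs_inequality_0) (use k u0 b in auto)
    have e1: "(u powr k) powr (1/k) = u" using k u0 by (simp add: powr_powr)
    have e2: "(b powr k) powr (1 - 1/k) = b powr (k - 1)" using k by (simp add: powr_powr algebra_simps)
    have "u * b powr (k - 1) \<le> (1/k) * u powr k + (1 - 1/k) * b powr k" using y e1 e2 by simp
    hence "k * (u * b powr (k - 1)) \<le> k * ((1/k) * u powr k + (1 - 1/k) * b powr k)"
      using k by (intro mult_left_mono) auto
    hence "k * u * b powr (k - 1) \<le> u powr k + (k - 1) * b powr k"
      using k by (simp add: algebra_simps)
    thus ?thesis using bk by (simp add: algebra_simps)
  qed
qed

lemma power_mean_powr:
  fixes X Y k :: real
  assumes X: "X \<ge> 0" and Y: "Y \<ge> 0" and k: "k \<ge> 1"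
  shows "((X + Y) / 2) powr k \<le> (X powr k + Y powr k) / 2"
proof (cases "X + Y = 0")
  case True
  hence "X = 0" "Y = 0" using X Y by auto
  thus ?thesis by simp
next
  case False
  define b where "b = (X + Y) / 2"
  have b: "b > 0" using False X Y by (simp add: b_def)
  have "b powr k + k * b powr (k - 1) * (X - b) \<le> X powr k" by (rule tangent_powr[OF X b k])
  moreover have "b powr k + k * b powr (k - 1) * (Y - b) \<le> Y powr k" by (rule tangent_powr[OF Y b k])
  moreover have "(X - b) + (Y - b) = 0" by (simp add: b_def)
  ultimately have "2 * b powr k \<le> X powr k + Y powr k"
    by (smt (verit, ccfv_threshold) distrib_left)
  thus ?thesis by (simp add: b_def)
qed

lemma young_weak:
  fixes a b p q :: real
  assumes a: "a \<ge> 0" and b: "b \<ge> 0" and p: "p > 1" and q: "q > 1" and pq: "1/p + 1/q = 1"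
  shows "a powr (1/p) * b powr (1/q) \<le> (1/p) * a + (1/q) * b"
proof (cases "a = 0 \<or> b = 0")
  case True
  thus ?thesis using a b p q by auto
next
  case False
  thus ?thesis using a b p q pq by (intro Youngs_inequality_0) auto
qed

lemma holder2:
  fixes a1 a2 b1 b2 p q :: real
  assumes nn: "a1 \<ge> 0" "a2 \<ge> 0" "b1 \<ge> 0" "b2 \<ge> 0"
    and p: "p > 1" and q: "q > 1" and pq: "1/p + 1/q = 1"
  shows "a1 powr (1/p) * b1 powr (1/q) + a2 powr (1/p) * b2 powr (1/q)
      \<le> (a1 + a2) powr (1/p) * (b1 + b2) powr (1/q)"
proof (cases "a1 + a2 = 0 \<or> b1 + b2 = 0")
  case True
  hence "(a1 = 0 \<and> a2 = 0) \<or> (b1 = 0 \<and> b2 = 0)" using nn by auto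
  thus ?thesis using p q by auto
next
  case False
  define A where "A = a1 + a2"
  define B where "B = b1 + b2"
  have A: "A > 0" and B: "B > 0" using False nn by (auto simp: A_def B_def)
  have y1: "(a1 / A) powr (1/p) * (b1 / B) powr (1/q) \<le> (1/p) * (a1 / A) + (1/q) * (b1 / B)"
    by (rule young_weak) (use nn A B p q pq in auto)
  have y2: "(a2 / A) powr (1/p) * (b2 / B) powr (1/q) \<le> (1/p) * (a2 / A) + (1/q) * (b2 / B)"
    by (rule young_weak) (use nn A B p q pq in auto)
  have sum1: "(1/p) * (a1 / A) + (1/q) * (b1 / B) + ((1/p) * (a2 / A) + (1/q) * (b2 / B)) = 1"
  proof -
    have "(1/p) * (a1 / A) + (1/q) * (b1 / B) + ((1/p) * (a2 / A) + (1/q) * (b2 / B))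
        = (1/p) * ((a1 + a2) / A) + (1/q) * ((b1 + b2) / B)" by (simp add: algebra_simps add_divide_distrib)
    also have "\<dots> = 1/p + 1/q" using A B by (simp add: A_def B_def)
    finally show ?thesis using pq by simp
  qed
  define C where "C = A powr (1/p) * B powr (1/q)"
  have C: "C > 0" using A B by (simp add: C_def)
  have t1: "a1 powr (1/p) * b1 powr (1/q) = C * ((a1 / A) powr (1/p) * (b1 / B) powr (1/q))"
    using A B by (simp add: C_def powr_divide)
  have t2: "a2 powr (1/p) * b2 powr (1/q) = C * ((a2 / A) powr (1/p) * (b2 / B) powr (1/q))"
    using A B by (simp add: C_def powr_divide)
  have "a1 powr (1/p) * b1 powr (1/q) + a2 powr (1/p) * b2 powr (1/q)
      = C * ((a1 / A) powr (1/p) * (b1 / B) powr (1/q) + (a2 / A) powr (1/p) * (b2 / B) powr (1/q))"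
    by (simp add: t1 t2 distrib_left)
  also have "\<dots> \<le> C * 1"
    using y1 y2 sum1 C by (intro mult_left_mono) auto
  finally show ?thesis by (simp add: C_def A_def B_def)
qed


lemma cont_sub: "continuous_on {0..} f \<Longrightarrow> continuous_on {0..c} (f::real \<Rightarrow> real)"
  by (rule continuous_on_subset) auto

lemma cs_fg:
  fixes M :: "'a::complex_hilbert \<Rightarrow>\<^sub>L 'a"
  assumes M: "psd M" and cf: "continuous_on {0..} f" and cg: "continuous_on {0..} g"
    and fg: "\<forall>t\<ge>0. f t * g t = t"
  shows "inner (M x) x \<le> norm (fcalc f M x) * norm (fcalc g M x)"
proof -
  have cfK: "continuous_on {0..norm M} f" by (rule cont_sub[OF cf])
  have cgK: "continuous_on {0..norm M} g" by (rule cont_sub[OF cg])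
  have "fcalc f M o\<^sub>L fcalc g M = fcalc (\<lambda>t. f t * g t) M" by (rule fcalc_mult[OF M cfK cgK, symmetric])
  also have "\<dots> = fcalc (poly [:0, 1:]) M"
    by (rule fcalc_cong[OF M]) (use fg in \<open>auto intro!: continuous_intros cfK cgK\<close>)
  also have "\<dots> = M" by (simp add: fcalc_poly[OF M] poly_op_X)
  finally have eq: "M x = fcalc f M (fcalc g M x)" by (metis blinfun_apply_blinfun_compose)
  have saP: "sa (fcalc f M)" by (rule fcalc_sa[OF M cfK])
  have "inner (M x) x = inner (fcalc g M x) (fcalc f M x)"
    using saP eq by (simp add: sa_def)
  also have "\<dots> \<le> norm (fcalc g M x) * norm (fcalc f M x)" by (rule norm_cauchy_schwarz)
  finally show ?thesis by (simp add: mult.commute)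
qed

lemma cont_powr: "s > 0 \<Longrightarrow> continuous_on {0..c} (\<lambda>t::real. t powr s)"
  by (intro continuous_on_powr' continuous_intros) auto

lemma hm:
  fixes P :: "'a::complex_hilbert \<Rightarrow>\<^sub>L 'a"
  assumes P: "psd P" and s: "s \<ge> 2" and x: "norm x = 1"
  shows "norm (P x) powr s \<le> inner (fcalc (\<lambda>t. t powr s) P x) x"
proof -
  have cp: "continuous_on {0..norm P} (\<lambda>t. t powr s)" by (rule cont_powr) (use s in simp)
  define b where "b = (norm (P x))\<^sup>2"
  show ?thesis
  proof (cases "b = 0")
    case True
    hence "norm (P x) = 0" by (simp add: b_def)
    moreover have "psd (fcalc (\<lambda>t. t powr s) P)" by (rule fcalc_psd[OF P cp]) simp
    ultimately show ?thesis by (simp add: psd_def)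
  next
    case False
    hence b: "b > 0" by (simp add: b_def)
    define k where "k = s / 2"
    have k: "k \<ge> 1" using s by (simp add: k_def)
    define c1 where "c1 = k * b powr (k - 1)"
    define c0 where "c0 = b powr k - c1 * b"
    define g where "g = [:c0:] + smult c1 [:0, 0, 1:]"
    have pg: "poly g t = c0 + c1 * t\<^sup>2" for t by (simp add: g_def power2_eq_square)
    have le: "\<forall>t\<in>{0..norm P}. poly g t \<le> t powr s"
    proof
      fix t assume t: "t \<in> {0..norm P}"
      hence t0: "t \<ge> 0" by simp
      have "b powr k + k * b powr (k - 1) * (t\<^sup>2 - b) \<le> (t\<^sup>2) powr k"
        by (rule tangent_powr[OF _ b k]) simp
      moreover have "(t\<^sup>2) powr k = t powr s"
      proof -
        have "(t\<^sup>2) powr k = (t powr 2) powr k" using t0 by simp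
        also have "\<dots> = t powr s" by (simp add: powr_powr k_def)
        finally show ?thesis .
      qed
      ultimately show "poly g t \<le> t powr s" by (simp add: pg c0_def c1_def algebra_simps)
    qed
    have "inner (fcalc (poly g) P x) x \<le> inner (fcalc (\<lambda>t. t powr s) P x) x"
      by (rule fcalc_mono[OF P cp _ le]) (intro continuous_on_poly continuous_on_id)
    moreover have "inner (fcalc (poly g) P x) x = b powr k"
    proof -
      have saP: "sa P" using P by (simp add: psd_def)
      have "inner (P (P x)) x = b" using saP by (simp add: sa_def b_def power2_norm_eq_inner)
      moreover have "fcalc (poly g) P = c0 *\<^sub>R id_blinfun + c1 *\<^sub>R (P o\<^sub>L P)"
        unfolding fcalc_poly[OF P] g_def by (simp only: poly_op_add poly_op_const poly_op_smult poly_op_sq)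
      ultimately have "inner (fcalc (poly g) P x) x = c0 + c1 * b"
        using x by (simp add: blinfun.add_left blinfun.scaleR_left inner_add_left power2_norm_eq_inner[symmetric])
      thus ?thesis by (simp add: c0_def)
    qed
    moreover have "norm (P x) powr s = b powr k"
    proof -
      have "b powr k = (norm (P x) powr 2) powr k" by (simp add: b_def)
      also have "\<dots> = norm (P x) powr (2 * k)" by (simp only: powr_powr)
      also have "2 * k = s" by (simp add: k_def)
      finally show ?thesis by simp
    qed
    ultimately show ?thesis by simp
  qed
qed

lemma key:
  fixes S :: "'a::complex_hilbert \<Rightarrow>\<^sub>L 'a"
  assumes saS: "sa S" and cf: "continuous_on {0..} f" and cg: "continuous_on {0..} g"
    and nf: "\<forall>t\<ge>0. f t \<ge> 0" and ng: "\<forall>t\<ge>0. g t \<ge> 0" and fg: "\<forall>t\<ge>0. f t * g t = t"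
    and r: "r \<ge> 2" and p: "p > 1" and q: "q > 1" and pq: "1/p + 1/q = 1" and x: "norm x = 1"
  shows "\<bar>inner (S x) x\<bar> powr r \<le>
    (inner (fpow_abs f (r*p) S x) x) powr (1/p) * (inner (fpow_abs g (r*q) S x) x) powr (1/q)"
proof -
  define M where "M = abs_op S"
  have M: "psd M" unfolding M_def by (rule abs_op_psd[OF saS])
  define P1 where "P1 = fcalc f M"
  define Q1 where "Q1 = fcalc g M"
  have P1: "psd P1" unfolding P1_def by (rule fcalc_psd[OF M cont_sub[OF cf]]) (use nf in auto)
  have Q1: "psd Q1" unfolding Q1_def by (rule fcalc_psd[OF M cont_sub[OF cg]]) (use ng in auto)
  define a where "a = norm (P1 x)"
  define b where "b = norm (Q1 x)"
  have a0: "a \<ge> 0" and b0: "b \<ge> 0" by (simp_all add: a_def b_def)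
  have u: "\<bar>inner (S x) x\<bar> \<le> a * b"
  proof -
    have "\<bar>inner (S x) x\<bar> \<le> inner (M x) x" unfolding M_def by (rule abs_op_abs[OF saS])
    also have "\<dots> \<le> a * b" unfolding a_def b_def P1_def Q1_def by (rule cs_fg[OF M cf cg fg])
    finally show ?thesis .
  qed
  have rp: "r * p \<ge> 2" using r p by (smt (verit) mult_mono one_le_numeral mult.commute mult_le_cancel_left1)
  have rq: "r * q \<ge> 2" using r q by (smt (verit) mult_mono one_le_numeral mult.commute mult_le_cancel_left1)
  have hf: "a powr (r * p) \<le> inner (fpow_abs f (r*p) S x) x"
    unfolding a_def fpow_abs_def M_def[symmetric] P1_def[symmetric] by (rule hm[OF P1 rp x])
  have hg: "b powr (r * q) \<le> inner (fpow_abs g (r*q) S x) x"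
    unfolding b_def fpow_abs_def M_def[symmetric] Q1_def[symmetric] by (rule hm[OF Q1 rq x])
  have "\<bar>inner (S x) x\<bar> powr r \<le> (a * b) powr r" by (rule powr_mono2) (use r u in auto)
  also have "\<dots> = (a powr (r * p)) powr (1/p) * (b powr (r * q)) powr (1/q)"
    using p q by (simp add: powr_mult powr_powr)
  also have "\<dots> \<le> (inner (fpow_abs f (r*p) S x) x) powr (1/p) * (inner (fpow_abs g (r*q) S x) x) powr (1/q)"
    using p q hf hg by (intro mult_mono powr_mono2) auto
  finally show ?thesis .
qed



lemma cmod_cinner: "cmod (cinner x y) = sqrt ((inner x y)\<^sup>2 + (inner x (jmul y))\<^sup>2)"
  by (simp add: cinner_def complex_norm)

lemma cinner_prod: "cinner ((a::'a::complex_hilbert), (b::'a)) (c, d) = cinner a c + cinner b d"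
  by (simp add: cinner_def inner_prod_def jmul_prod_def complex_eq_iff)

lemma cmod_cinner_scale:
  fixes A :: "'a::complex_hilbert \<Rightarrow>\<^sub>L 'a"
  shows "cmod (cinner (A (c *\<^sub>R x)) (c *\<^sub>R x)) = c\<^sup>2 * cmod (cinner (A x) x)"
proof -
  have e1: "inner (A (c *\<^sub>R x)) (c *\<^sub>R x) = c\<^sup>2 * inner (A x) x"
    by (simp add: blinfun.scaleR_right power2_eq_square)
  have e2: "inner (A (c *\<^sub>R x)) (jmul (c *\<^sub>R x)) = c\<^sup>2 * inner (A x) (jmul x)"
    by (simp add: blinfun.scaleR_right jmul_scaleR power2_eq_square)
  have "cmod (cinner (A (c *\<^sub>R x)) (c *\<^sub>R x)) = sqrt ((inner (A (c *\<^sub>R x)) (c *\<^sub>R x))\<^sup>2 + (inner (A (c *\<^sub>R x)) (jmul (c *\<^sub>R x)))\<^sup>2)"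
    by (rule cmod_cinner)
  also have "\<dots> = sqrt ((c\<^sup>2 * inner (A x) x)\<^sup>2 + (c\<^sup>2 * inner (A x) (jmul x))\<^sup>2)"
    by (simp only: e1 e2)
  also have "\<dots> = sqrt ((c\<^sup>2)\<^sup>2 * ((inner (A x) x)\<^sup>2 + (inner (A x) (jmul x))\<^sup>2))"
    by (simp add: power_mult_distrib algebra_simps)
  also have "\<dots> = sqrt ((c\<^sup>2)\<^sup>2) * sqrt ((inner (A x) x)\<^sup>2 + (inner (A x) (jmul x))\<^sup>2)"
    by (rule real_sqrt_mult)
  also have "\<dots> = c\<^sup>2 * cmod (cinner (A x) x)"
    by (simp only: real_sqrt_abs abs_power2 cmod_cinner)
  finally show ?thesis .
qed

lemma fpow_psd:
  fixes S :: "'a::complex_hilbert \<Rightarrow>\<^sub>L 'a"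
  assumes saS: "sa S" and cf: "continuous_on {0..} f" and nf: "\<forall>t\<ge>0. f t \<ge> 0" and s: "s > 0"
  shows "psd (fpow_abs f s S)"
proof -
  have M: "psd (abs_op S)" by (rule abs_op_psd[OF saS])
  have P1: "psd (fcalc f (abs_op S))" by (rule fcalc_psd[OF M cont_sub[OF cf]]) (use nf in auto)
  show ?thesis unfolding fpow_abs_def by (rule fcalc_psd[OF P1 cont_powr[OF s]]) simp
qed

lemma re_im_forms:
  fixes A :: "'a::complex_hilbert \<Rightarrow>\<^sub>L 'a"
  assumes hA: "clinear_op A"
  shows "inner ((ReOp A + ImOp A) x) x = inner (A x) x + inner (A x) (jmul x)"
    and "inner ((ReOp A - ImOp A) x) x = inner (A x) x - inner (A x) (jmul x)"
  by (simp_all add: blinfun.add_left blinfun.diff_left inner_add_left inner_diff_left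
      ReOp_form ImOp_form[OF hA])

lemma unit_bound:
  fixes A :: "'a::complex_hilbert \<Rightarrow>\<^sub>L 'a"
  assumes hA: "clinear_op A"
    and r: "r \<ge> 2" and p: "p > 1" and q: "q > 1" and pq: "1/p + 1/q = 1"
    and cf1: "continuous_on {0..} f1" and cg1: "continuous_on {0..} g1"
    and cf2: "continuous_on {0..} f2" and cg2: "continuous_on {0..} g2"
    and nf1: "\<forall>t\<ge>0. f1 t \<ge> 0" and ng1: "\<forall>t\<ge>0. g1 t \<ge> 0"
    and nf2: "\<forall>t\<ge>0. f2 t \<ge> 0" and ng2: "\<forall>t\<ge>0. g2 t \<ge> 0"
    and fg1: "\<forall>t\<ge>0. f1 t * g1 t = t" and fg2: "\<forall>t\<ge>0. f2 t * g2 t = t"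
    and x: "norm x = 1"
  shows "cmod (cinner (A x) x) powr r \<le> 1/2 *
     (norm (fpow_abs f1 (r*p) (ReOp A + ImOp A) + fpow_abs f2 (r*p) (ReOp A - ImOp A))) powr (1/p) *
     (norm (fpow_abs g1 (r*q) (ReOp A + ImOp A) + fpow_abs g2 (r*q) (ReOp A - ImOp A))) powr (1/q)"
proof -
  define S where "S = ReOp A + ImOp A"
  define S' where "S' = ReOp A - ImOp A"
  have saS: "sa S" unfolding S_def by (rule sa_add[OF sa_ReOp sa_ImOp[OF hA]])
  have saS': "sa S'" unfolding S'_def by (rule sa_diff[OF sa_ReOp sa_ImOp[OF hA]])
  define a where "a = inner (A x) x"
  define b where "b = inner (A x) (jmul x)"
  define u where "u = inner (S x) x"
  define v where "v = inner (S' x) x"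
  have uv: "u = a + b" "v = a - b" unfolding u_def v_def a_def b_def S_def S'_def
    by (rule re_im_forms[OF hA])+
  have rp: "r * p > 0" "r * q > 0" using r p q by auto
  define F1 where "F1 = inner (fpow_abs f1 (r*p) S x) x"
  define F2 where "F2 = inner (fpow_abs f2 (r*p) S' x) x"
  define G1 where "G1 = inner (fpow_abs g1 (r*q) S x) x"
  define G2 where "G2 = inner (fpow_abs g2 (r*q) S' x) x"
  have nn: "F1 \<ge> 0" "F2 \<ge> 0" "G1 \<ge> 0" "G2 \<ge> 0"
    unfolding F1_def F2_def G1_def G2_def
    using fpow_psd[OF saS cf1 nf1 rp(1)] fpow_psd[OF saS' cf2 nf2 rp(1)]
      fpow_psd[OF saS cg1 ng1 rp(2)] fpow_psd[OF saS' cg2 ng2 rp(2)]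
    by (auto simp: psd_def)
  have k1: "\<bar>u\<bar> powr r \<le> F1 powr (1/p) * G1 powr (1/q)"
    unfolding u_def F1_def G1_def by (rule key[OF saS cf1 cg1 nf1 ng1 fg1 r p q pq x])
  have k2: "\<bar>v\<bar> powr r \<le> F2 powr (1/p) * G2 powr (1/q)"
    unfolding v_def F2_def G2_def by (rule key[OF saS' cf2 cg2 nf2 ng2 fg2 r p q pq x])
  have cm: "(cmod (cinner (A x) x))\<^sup>2 = (u\<^sup>2 + v\<^sup>2) / 2"
    by (simp add: cmod_cinner a_def[symmetric] b_def[symmetric] uv power2_eq_square algebra_simps)
  have "cmod (cinner (A x) x) powr r = ((cmod (cinner (A x) x))\<^sup>2) powr (r / 2)"
  proof -
    have "((cmod (cinner (A x) x))\<^sup>2) powr (r / 2) = (cmod (cinner (A x) x) powr 2) powr (r / 2)" by simp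
    also have "\<dots> = cmod (cinner (A x) x) powr (2 * (r / 2))" by (simp only: powr_powr)
    finally show ?thesis by simp
  qed
  also have "\<dots> = ((u\<^sup>2 + v\<^sup>2) / 2) powr (r / 2)" by (simp add: cm)
  also have "\<dots> \<le> ((u\<^sup>2) powr (r / 2) + (v\<^sup>2) powr (r / 2)) / 2"
    by (rule power_mean_powr) (use r in auto)
  also have "(u\<^sup>2) powr (r / 2) = \<bar>u\<bar> powr r"
  proof -
    have "(u\<^sup>2) powr (r / 2) = (\<bar>u\<bar> powr 2) powr (r / 2)" by simp
    also have "\<dots> = \<bar>u\<bar> powr (2 * (r / 2))" by (simp only: powr_powr)
    finally show ?thesis by simp
  qed
  also have "(v\<^sup>2) powr (r / 2) = \<bar>v\<bar> powr r"
  proof -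
    have "(v\<^sup>2) powr (r / 2) = (\<bar>v\<bar> powr 2) powr (r / 2)" by simp
    also have "\<dots> = \<bar>v\<bar> powr (2 * (r / 2))" by (simp only: powr_powr)
    finally show ?thesis by simp
  qed
  also have "(\<bar>u\<bar> powr r + \<bar>v\<bar> powr r) / 2 \<le> (F1 powr (1/p) * G1 powr (1/q) + F2 powr (1/p) * G2 powr (1/q)) / 2"
    using k1 k2 by simp
  also have "\<dots> \<le> ((F1 + F2) powr (1/p) * (G1 + G2) powr (1/q)) / 2"
    using holder2[OF nn(1,2,3,4) p q pq] by simp
  also have "\<dots> \<le> ((norm (fpow_abs f1 (r*p) S + fpow_abs f2 (r*p) S')) powr (1/p) *
      (norm (fpow_abs g1 (r*q) S + fpow_abs g2 (r*q) S')) powr (1/q)) / 2"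
  proof -
    have "F1 + F2 = inner ((fpow_abs f1 (r*p) S + fpow_abs f2 (r*p) S') x) x"
      by (simp add: F1_def F2_def blinfun.add_left inner_add_left)
    also have "\<dots> \<le> norm (fpow_abs f1 (r*p) S + fpow_abs f2 (r*p) S') * (norm x)\<^sup>2" by (rule form_le_norm)
    finally have hF: "F1 + F2 \<le> norm (fpow_abs f1 (r*p) S + fpow_abs f2 (r*p) S')" using x by simp
    have "G1 + G2 = inner ((fpow_abs g1 (r*q) S + fpow_abs g2 (r*q) S') x) x"
      by (simp add: G1_def G2_def blinfun.add_left inner_add_left)
    also have "\<dots> \<le> norm (fpow_abs g1 (r*q) S + fpow_abs g2 (r*q) S') * (norm x)\<^sup>2" by (rule form_le_norm)
    finally have hG: "G1 + G2 \<le> norm (fpow_abs g1 (r*q) S + fpow_abs g2 (r*q) S')" using x by simp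
    show ?thesis using hF hG nn p q by (intro divide_right_mono mult_mono powr_mono2) auto
  qed
  finally show ?thesis by (simp add: S_def S'_def)
qed

lemma all_bound:
  fixes A :: "'a::complex_hilbert \<Rightarrow>\<^sub>L 'a"
  assumes B: "B \<ge> 0" and r: "r > 0"
    and h: "\<And>x. norm x = 1 \<Longrightarrow> cmod (cinner (A x) x) powr r \<le> B"
  shows "cmod (cinner (A x) x) \<le> B powr (1/r) * (norm x)\<^sup>2"
proof (cases "x = 0")
  case True
  thus ?thesis by (simp add: cmod_cinner)
next
  case False
  define y where "y = (1 / norm x) *\<^sub>R x"
  have y: "norm y = 1" using False by (simp add: y_def)
  have eq: "cmod (cinner (A y) y) = (1 / norm x)\<^sup>2 * cmod (cinner (A x) x)"
    unfolding y_def by (rule cmod_cinner_scale)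
  have "cmod (cinner (A y) y) = (cmod (cinner (A y) y) powr r) powr (1/r)"
    using r by (simp add: powr_powr)
  also have "\<dots> \<le> B powr (1/r)" using h[OF y] r by (intro powr_mono2) auto
  finally have "(1 / norm x)\<^sup>2 * cmod (cinner (A x) x) \<le> B powr (1/r)" using eq by simp
  hence "cmod (cinner (A x) x) \<le> B powr (1/r) * (norm x)\<^sup>2"
    using False by (simp add: field_simps)
  thus ?thesis .
qed

lemma diag_apply: "diag_op A D (x, y) = (A x, D y)"
proof -
  have "bounded_linear (\<lambda>z. (A (fst z), D (snd z)))"
    by (intro bounded_linear_Pair bounded_linear_compose[OF blinfun.bounded_linear_right]
        bounded_linear_fst bounded_linear_snd)
  moreover have "(\<lambda>(x, y). (A x, D y)) = (\<lambda>z. (A (fst z), D (snd z)))" by auto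
  ultimately show ?thesis by (simp add: diag_op_def bounded_linear_Blinfun_apply)
qed

lemma numrad_diag:
  fixes A D :: "'a::complex_hilbert \<Rightarrow>\<^sub>L 'a"
  assumes BA: "BA \<ge> 0" and BD: "BD \<ge> 0" and r: "r > 0"
    and hA: "\<And>x. norm x = 1 \<Longrightarrow> cmod (cinner (A x) x) powr r \<le> BA"
    and hD: "\<And>x. norm x = 1 \<Longrightarrow> cmod (cinner (D x) x) powr r \<le> BD"
  shows "numrad (diag_op A D) powr r \<le> max BA BD"
proof -
  define W where "W = max (BA powr (1/r)) (BD powr (1/r))"
  have W0: "W \<ge> 0" unfolding W_def by (rule order_trans[OF _ max.cobounded1]) simp
  have bnd: "cmod (cinner (diag_op A D z) z) \<le> W" if "norm z = 1" for z
  proof -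
    obtain x y where z: "z = (x, y)" by fastforce
    have n: "(norm x)\<^sup>2 + (norm y)\<^sup>2 = 1" using that z by (simp add: norm_Pair)
    have "cmod (cinner (diag_op A D z) z) = cmod (cinner (A x) x + cinner (D y) y)"
      by (simp add: z diag_apply cinner_prod)
    also have "\<dots> \<le> cmod (cinner (A x) x) + cmod (cinner (D y) y)" by (rule norm_triangle_ineq)
    also have "\<dots> \<le> BA powr (1/r) * (norm x)\<^sup>2 + BD powr (1/r) * (norm y)\<^sup>2"
      using all_bound[OF BA r hA, of x] all_bound[OF BD r hD, of y] by linarith
    also have "\<dots> \<le> W * (norm x)\<^sup>2 + W * (norm y)\<^sup>2"
      by (intro add_mono mult_right_mono) (auto simp: W_def)
    also have "\<dots> = W" using n by (simp add: distrib_left[symmetric])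
    finally show ?thesis .
  qed
  have nr: "numrad (diag_op A D) \<le> W"
    unfolding numrad_def
    by (rule cSup_least) (use bnd W0 in auto)
  have nr0: "numrad (diag_op A D) \<ge> 0"
    unfolding numrad_def
    by (rule cSup_upper2[of 0]) (use bnd in \<open>auto intro!: bdd_aboveI[of _ W]\<close>)
  have "numrad (diag_op A D) powr r \<le> W powr r" using nr nr0 r by (intro powr_mono2) auto
  also have "W powr r = max BA BD"
  proof -
    have a: "(BA powr (1/r)) powr r = BA" using r BA by (simp add: powr_powr)
    have d: "(BD powr (1/r)) powr r = BD" using r BD by (simp add: powr_powr)
    show ?thesis
    proof (cases "BA powr (1/r) \<le> BD powr (1/r)")
      case True
      hence "BA \<le> BD" using a d r by (metis powr_mono2 less_imp_le powr_ge_zero)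
      thus ?thesis using True d by (simp add: W_def max_def)
    next
      case False
      hence "BD \<le> BA" using a d r by (metis powr_mono2 less_imp_le powr_ge_zero not_le)
      thus ?thesis using False a by (simp add: W_def max_def)
    qed
  qed
  finally show ?thesis .
qed

theorem theorem3p11:
  fixes A D :: "'h::complex_hilbert \<Rightarrow>\<^sub>L 'h"
    and r p q :: real
    and f1 g1 f2 g2 :: "real \<Rightarrow> real"
  assumes hA: "clinear_op A" and hD: "clinear_op D"
    and hr: "r \<ge> 2" and hp: "p > 1" and hq: "q > 1" and hpq: "1/p + 1/q = 1"
    and cf1: "continuous_on {0..} f1" and cg1: "continuous_on {0..} g1"
    and cf2: "continuous_on {0..} f2" and cg2: "continuous_on {0..} g2"
    and nf1: "\<forall>t\<ge>0. f1 t \<ge> 0" and ng1: "\<forall>t\<ge>0. g1 t \<ge> 0"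
    and nf2: "\<forall>t\<ge>0. f2 t \<ge> 0" and ng2: "\<forall>t\<ge>0. g2 t \<ge> 0"
    and fg1: "\<forall>t\<ge>0. f1 t * g1 t = t" and fg2: "\<forall>t\<ge>0. f2 t * g2 t = t"
  defines "T \<equiv> diag_op A D"
    and "\<alpha> \<equiv> norm (fpow_abs f1 (r*p) (ReOp A + ImOp A) + fpow_abs f2 (r*p) (ReOp A - ImOp A))"
    and "\<beta> \<equiv> norm (fpow_abs f1 (r*p) (ReOp D + ImOp D) + fpow_abs f2 (r*p) (ReOp D - ImOp D))"
    and "\<gamma> \<equiv> norm (fpow_abs g1 (r*q) (ReOp A + ImOp A) + fpow_abs g2 (r*q) (ReOp A - ImOp A))"
    and "\<delta> \<equiv> norm (fpow_abs g1 (r*q) (ReOp D + ImOp D) + fpow_abs g2 (r*q) (ReOp D - ImOp D))"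
    and "\<alpha>' \<equiv> norm (fpow_abs f1 (r*p) (ReOp A + ImOp A) + fpow_abs g2 (r*p) (ReOp A - ImOp A))"
    and "\<beta>' \<equiv> norm (fpow_abs f1 (r*p) (ReOp D + ImOp D) + fpow_abs g2 (r*p) (ReOp D - ImOp D))"
    and "\<gamma>' \<equiv> norm (fpow_abs g1 (r*q) (ReOp A + ImOp A) + fpow_abs f2 (r*q) (ReOp A - ImOp A))"
    and "\<delta>' \<equiv> norm (fpow_abs g1 (r*q) (ReOp D + ImOp D) + fpow_abs f2 (r*q) (ReOp D - ImOp D))"
  shows "numrad T powr r \<le> 1/2 * (max \<alpha> \<beta>) powr (1/p) * (max \<gamma> \<delta>) powr (1/q)
       \<and> numrad T powr r \<le> 1/2 * (max \<alpha>' \<beta>') powr (1/p) * (max \<gamma>' \<delta>') powr (1/q)"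
  proof -
  have r0: "r > 0" using hr by simp
  note defs = assms(17-25)
  have aux: "max BA BD \<le> 1/2 * (max a b) powr (1/p) * (max c d) powr (1/q)"
    if "BA = 1/2 * a powr (1/p) * c powr (1/q)" "BD = 1/2 * b powr (1/p) * d powr (1/q)"
      "a \<ge> 0" "b \<ge> 0" "c \<ge> 0" "d \<ge> 0" for BA BD a b c d :: real
  proof -
    have "BA \<le> 1/2 * (max a b) powr (1/p) * (max c d) powr (1/q)"
      unfolding that(1) using that hp hq
      by (intro mult_mono mult_left_mono powr_mono2) auto
    moreover have "BD \<le> 1/2 * (max a b) powr (1/p) * (max c d) powr (1/q)"
      unfolding that(2) using that hp hq
      by (intro mult_mono mult_left_mono powr_mono2) auto
    ultimately show ?thesis by simp
  qed
  have fg2': "\<forall>t\<ge>0. g2 t * f2 t = t" using fg2 by (simp add: mult.commute)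
  show ?thesis
  proof
    have "numrad T powr r \<le> max (1/2 * \<alpha> powr (1/p) * \<gamma> powr (1/q)) (1/2 * \<beta> powr (1/p) * \<delta> powr (1/q))"
      unfolding defs
      by (rule numrad_diag[OF _ _ r0 unit_bound[OF hA hr hp hq hpq cf1 cg1 cf2 cg2 nf1 ng1 nf2 ng2 fg1 fg2]
            unit_bound[OF hD hr hp hq hpq cf1 cg1 cf2 cg2 nf1 ng1 nf2 ng2 fg1 fg2]]) simp_all
    also have "\<dots> \<le> 1/2 * (max \<alpha> \<beta>) powr (1/p) * (max \<gamma> \<delta>) powr (1/q)"
      by (rule aux) (simp_all add: defs)
    finally show "numrad T powr r \<le> 1/2 * (max \<alpha> \<beta>) powr (1/p) * (max \<gamma> \<delta>) powr (1/q)" .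
  next
    have "numrad T powr r \<le> max (1/2 * \<alpha>' powr (1/p) * \<gamma>' powr (1/q)) (1/2 * \<beta>' powr (1/p) * \<delta>' powr (1/q))"
      unfolding defs
      by (rule numrad_diag[OF _ _ r0 unit_bound[OF hA hr hp hq hpq cf1 cg1 cg2 cf2 nf1 ng1 ng2 nf2 fg1 fg2']
            unit_bound[OF hD hr hp hq hpq cf1 cg1 cg2 cf2 nf1 ng1 ng2 nf2 fg1 fg2']]) simp_all
    also have "\<dots> \<le> 1/2 * (max \<alpha>' \<beta>') powr (1/p) * (max \<gamma>' \<delta>') powr (1/q)"
      by (rule aux) (simp_all add: defs)
    finally show "numrad T powr r \<le> 1/2 * (max \<alpha>' \<beta>') powr (1/p) * (max \<gamma>' \<delta>') powr (1/q)" .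
  qed
qed


end
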